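(* Consider the following ZP-OFDM model with no timing offset (hypothesis ${\rm H}_0$, $d=0$). Let $n_{\rm x}\ge1$, $n_{\rm h}\ge 1$, $n_{\rm z}\ge n_{\rm h}$ and $n_{\rm s}=n_{\rm x}+n_{\rm z}$. For block index $n\ge 0$, the transmitted block is $s_n[k]=x_n[k]$ for $0\le k\le n_{\rm x}-1$ and $s_n[k]=0$ for $n_{\rm x}\le k\le n_{\rm s}-1$ (and $s_n[k]=0$ for $k<0$), where the data samples $x_n[k]$ are i.i.d. $\mathcal{CN}(0,\sigma_{\rm x}^2)$. For $n\ge 0$ and $0\le m\le n_{\rm s}-1$ the received sample is $$y_n[m]=\sum_{l=0}^{n_{\rm h}-1}h[nn_{\rm s}+m;l]\,s_n[m-l]+w_n[m],$$ and for $n<0$ (samples received before any transmission) $y_n[m]=w_n[m]$, where for each fixed $(n,m)$ the taps $h[nn_{\rm s}+m;l]\sim\mathcal{CN}(0,\sigma_{{\rm h}_l}^2)$, $l=0,\dots,n_{\rm h}-1$, are mutually independent, the noise $w_n[m]\sim\mathcal{CN}(0,\sigma_{\rm w}^2)$, and data, channel and noise are mutually independent. Let $y_{n_{\rm I}}[m]=\Re\{y_n[m]\}$ and let $f_{Y_{n_{\rm I}}[m]}(\cdot\,|{\rm H}_0)$ be its PDF. Then: (i) If $n<0$ and $0\le m\le n_{\rm s}-1$, or if $n\ge 0$ and $n_{\rm x}+n_{\rm h}-1\le m\le n_{\rm s}-1$, then $$f_{Y_{n_{\rm I}}[m]}(y|{\rm H}_0)=\frac{1}{\sqrt{\pi\sigma_{\rm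 w}^2}}\exp\Big(-\frac{y^2}{\sigma_{\rm w}^2}\Big).$$ (ii) If $n\ge 0$ and $0\le m\le n_{\rm x}+n_{\rm h}-2$, define $\lambda_k=2/(\sigma_{{\rm h}_k}\sigma_{\rm x})$ and $$(a,b)=\begin{cases}(0,m), & 0\le m\le n_{\rm h}-2,\\ (0,n_{\rm h}-1), & n_{\rm h}-1\le m\le n_{\rm x}-1,\\ (m-n_{\rm x}+1,\,n_{\rm h}-1), & n_{\rm x}\le m\le n_{\rm x}+n_{\rm h}-2,\end{cases}$$ and assume $\lambda_a,\dots,\lambda_b$ are pairwise distinct. Then $f_{Y_{n_{\rm I}}[m]}(y|{\rm H}_0)=f_{Y_{n_{\rm I}}[m]}(-y|{\rm H}_0)$ and $$f_{Y_{n_{\rm I}}[m]}(y|{\rm H}_0)=\Big(\prod_{i=a}^{b}\lambda_i\Big)^2\sum_{j=a}^{b}\sum_{n'=a}^{b}\frac{e^{(\lambda_j\sigma_{\rm w}/2)^2}}{\prod_{k=a,k\neq j}^{b}(\lambda_k-\lambda_j)\;\prod_{u=a,u\neq n'}^{b}(\lambda_u-\lambda_{n'})\;(\lambda_j+\lambda_{n'})}\cdot\frac12\Big[e^{-\lambda_j y}\Big(1-\Phi\Big(\frac{\lambda_j\sigma_{\rm w}}{2}-\frac{y}{\sigma_{\rm w}}\Big)\Big)+e^{\lambda_j y}\Big(1-\Phi\Big(\frac{\lambda_j\sigma_{\rm w}}{2}+\frac{y}{\sigma_{\rm w}}\Big)\Big)\Big],$$ where empty products equal $1$. The same expressions hold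 for the PDF of the quadrature component $\Im\{y_n[m]\}$.
   Context: $\mathcal{CN}(0,\sigma^2)$ denotes a circularly-symmetric zero-mean complex Gaussian random variable with variance $\sigma^2$ (so its real and imaginary parts are independent $\mathcal{N}(0,\sigma^2/2)$). $\Phi(x)=\mathrm{erf}(x)=\frac{2}{\sqrt\pi}\int_0^x e^{-t^2}\,dt$ is the Gaussian error function. $\sigma_{{\rm h}_l}^2$, $l=0,\dots,n_{\rm h}-1$, is the (known) power delay profile of the channel, with $\sigma_{{\rm h}_l}>0$. *)

theory Defs
  imports "HOL-Probability.Probability"
begin

text \<open>Gaussian error function, erf(x) = 2/sqrt(pi) * integral from 0 to x of exp(-t^2)
  (oriented interval integral, so also correct for negative x).\<close>
definition erf :: "real \<Rightarrow> real" where
  "erf x = 2 / sqrt pi * (LBINT t=0..x. exp (- (t\<^sup>2)))"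

definition CN_rv :: "'a measure \<Rightarrow> real \<Rightarrow> ('a \<Rightarrow> complex) \<Rightarrow> bool" where
  "CN_rv M s2 X \<longleftrightarrow>
     X \<in> borel_measurable M \<and>
     distributed M lborel (\<lambda>\<omega>. Re (X \<omega>)) (\<lambda>t. ennreal (normal_density 0 (sqrt (s2 / 2)) t)) \<and>
     distributed M lborel (\<lambda>\<omega>. Im (X \<omega>)) (\<lambda>t. ennreal (normal_density 0 (sqrt (s2 / 2)) t)) \<and>
     prob_space.indep_var M borel (\<lambda>\<omega>. Re (X \<omega>)) borel (\<lambda>\<omega>. Im (X \<omega>))"

definition ofdm_s :: "nat \<Rightarrow> (int \<Rightarrow> nat \<Rightarrow> 'a \<Rightarrow> complex) \<Rightarrow> int \<Rightarrow> int \<Rightarrow> 'a \<Rightarrow> complex" where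
  "ofdm_s nx x n k \<omega> = (if 0 \<le> k \<and> k < int nx then x n (nat k) \<omega> else 0)"

definition ofdm_y :: "nat \<Rightarrow> nat \<Rightarrow> nat \<Rightarrow> (int \<Rightarrow> nat \<Rightarrow> 'a \<Rightarrow> complex)
    \<Rightarrow> (int \<Rightarrow> nat \<Rightarrow> 'a \<Rightarrow> complex) \<Rightarrow> (int \<Rightarrow> nat \<Rightarrow> 'a \<Rightarrow> complex)
    \<Rightarrow> int \<Rightarrow> nat \<Rightarrow> 'a \<Rightarrow> complex" where
  "ofdm_y nx ns nh x h w n m \<omega> =
     (if n < 0 then w n m \<omega>
      else (\<Sum>l<nh. h (n * int ns + int m) l \<omega> * ofdm_s nx x n (int m - int l) \<omega>) + w n m \<omega>)"

text \<open>The index range (a,b) of part (ii): the taps l with 0 <= m - l <= nx - 1.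
  This coincides with the paper's three-case definition
  (0,m) / (0,nh-1) / (m-nx+1,nh-1) on each of its cases whenever they do not overlap.\<close>
definition ofdm_ab :: "nat \<Rightarrow> nat \<Rightarrow> nat \<Rightarrow> nat \<times> nat" where
  "ofdm_ab nx nh m = ((m + 1) - nx, min m (nh - 1))"

definition ofdm_pdf :: "(nat \<Rightarrow> real) \<Rightarrow> real \<Rightarrow> nat \<Rightarrow> nat \<Rightarrow> real \<Rightarrow> real" where
  "ofdm_pdf lam sw a b y =
     (\<Prod>i=a..b. lam i)\<^sup>2 *
     (\<Sum>j=a..b. \<Sum>n'=a..b.
        exp ((lam j * sw / 2)\<^sup>2) /
          ((\<Prod>k\<in>{a..b} - {j}. (lam k - lam j)) * (\<Prod>u\<in>{a..b} - {n'}. (lam u - lam n')) * (lam j + lam n'))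
        * (1 / 2) * (exp (- lam j * y) * (1 - erf (lam j * sw / 2 - y / sw))
                     + exp (lam j * y) * (1 - erf (lam j * sw / 2 + y / sw))))"

end

theory Submission
  imports Defs
begin

lemma pf_identity:
  fixes lam :: "nat \<Rightarrow> 'a::field"
  assumes "finite S" "S \<noteq> {}" "inj_on lam S" "\<forall>i\<in>S. lam i \<noteq> s"
  shows "(\<Sum>j\<in>S. (\<Prod>i\<in>S. lam i) / (\<Prod>k\<in>S-{j}. (lam k - lam j)) / (lam j - s))
         = (\<Prod>l\<in>S. lam l / (lam l - s))"
  using assms
proof (induction S arbitrary: s rule: finite_ne_induct)
  case (singleton \<mu>)
  then show ?case by simp
next
  case (insert \<mu> S)
  let ?P = "\<Prod>i\<in>S. lam i"
  let ?D = "\<lambda>j. \<Prod>k\<in>S-{j}. (lam k - lam j)"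
  let ?R = "\<lambda>s. \<Prod>l\<in>S. lam l / (lam l - s)"
  have inj: "inj_on lam S" using insert.prems(1) by (auto dest: inj_on_subset)
  have mu: "\<mu> \<notin> S" using insert.hyps by auto
  have ne: "\<And>j. j \<in> S \<Longrightarrow> lam j \<noteq> lam \<mu>"
    using insert.prems(1) mu by (metis inj_on_contraD insertCI)
  have IHs: "(\<Sum>j\<in>S. ?P / ?D j / (lam j - s)) = ?R s"
    using insert.IH[of s] inj insert.prems(2) by auto
  have IHm: "(\<Sum>j\<in>S. ?P / ?D j / (lam j - lam \<mu>)) = ?R (lam \<mu>)"
    using insert.IH[of "lam \<mu>"] inj ne by auto
  have Rm: "?R (lam \<mu>) = ?P / (\<Prod>k\<in>S. (lam k - lam \<mu>))"
    by (simp add: prod_dividef)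
  have sm: "lam \<mu> \<noteq> s" using insert.prems(2) by auto
  have Dnz: "\<And>j. j \<in> S \<Longrightarrow> ?D j \<noteq> 0"
  proof -
    fix j assume j: "j \<in> S"
    show "?D j \<noteq> 0"
    proof (subst prod_zero_iff)
      show "finite (S - {j})" using insert.hyps by auto
      show "\<not> (\<exists>a\<in>S - {j}. lam a - lam j = 0)"
        using inj j by (auto dest: inj_onD)
    qed
  qed
  let ?c = "lam \<mu> / (lam \<mu> - s)"
  have trm: "\<And>j. j \<in> S \<Longrightarrow>
      (lam \<mu> * ?P) / ((lam \<mu> - lam j) * ?D j) / (lam j - s)
      = ?c * (?P / ?D j / (lam j - s)) - ?c * (?P / ?D j / (lam j - lam \<mu>))"
  proof -
    fix j assume j: "j \<in> S"
    have a: "lam \<mu> - lam j \<noteq> 0" using ne[OF j] by auto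
    have b: "lam j - s \<noteq> 0" using insert.prems(2) j by auto
    have c: "lam \<mu> - s \<noteq> 0" using sm by auto
    have d: "lam j - lam \<mu> \<noteq> 0" using ne[OF j] by auto
    have sc: "lam \<mu> / ((lam \<mu> - lam j) * (lam j - s)) = ?c / (lam j - s) - ?c / (lam j - lam \<mu>)"
      using a b c d by (simp add: divide_simps) (simp add: algebra_simps)
    have "(lam \<mu> * ?P) / ((lam \<mu> - lam j) * ?D j) / (lam j - s) = (?P / ?D j) * (lam \<mu> / ((lam \<mu> - lam j) * (lam j - s)))"
      by (simp add: divide_simps)
    also have "\<dots> = (?P / ?D j) * (?c / (lam j - s) - ?c / (lam j - lam \<mu>))" by (simp only: sc)
    also have "\<dots> = ?c * (?P / ?D j / (lam j - s)) - ?c * (?P / ?D j / (lam j - lam \<mu>))"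
      by (simp add: algebra_simps)
    finally show "?thesis j" .
  qed
  have prodins: "\<And>j. j \<in> S \<Longrightarrow> (\<Prod>k\<in>insert \<mu> S - {j}. (lam k - lam j)) = (lam \<mu> - lam j) * ?D j"
  proof -
    fix j assume j: "j \<in> S"
    have "insert \<mu> S - {j} = insert \<mu> (S - {j})" using j mu by auto
    then show "?thesis j" using insert.hyps mu by simp
  qed
  have "(\<Sum>j\<in>insert \<mu> S. (\<Prod>i\<in>insert \<mu> S. lam i) / (\<Prod>k\<in>insert \<mu> S-{j}. (lam k - lam j)) / (lam j - s))
      = (\<Sum>j\<in>S. (lam \<mu> * ?P) / ((lam \<mu> - lam j) * ?D j) / (lam j - s))
        + (lam \<mu> * ?P) / (\<Prod>k\<in>S. (lam k - lam \<mu>)) / (lam \<mu> - s)"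
    using insert.hyps mu prodins by (simp add: add.commute)
  also have "\<dots> = (\<Sum>j\<in>S. ?c * (?P / ?D j / (lam j - s)) - ?c * (?P / ?D j / (lam j - lam \<mu>)))
        + (lam \<mu> * ?P) / (\<Prod>k\<in>S. (lam k - lam \<mu>)) / (lam \<mu> - s)"
    using trm by simp
  also have "\<dots> = ?c * ?R s - ?c * ?R (lam \<mu>) + (lam \<mu> * ?P) / (\<Prod>k\<in>S. (lam k - lam \<mu>)) / (lam \<mu> - s)"
    by (simp only: sum_subtractf sum_distrib_left[symmetric] IHs IHm)
  also have "\<dots> = ?c * ?R s"
    by (simp add: Rm)
  also have "\<dots> = (\<Prod>l\<in>insert \<mu> S. lam l / (lam l - s))"
    using insert.hyps mu by simp
  finally show ?case .
qed

definition pfc :: "(nat \<Rightarrow> real) \<Rightarrow> nat set \<Rightarrow> nat \<Rightarrow> real" where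
  "pfc lam S j = (\<Prod>i\<in>S. lam i) / (\<Prod>k\<in>S-{j}. (lam k - lam j))"

lemma pf_complex:
  assumes "finite S" "S \<noteq> {}" "inj_on lam S" "\<forall>i\<in>S. lam i > 0" and s: "Re s = 0"
  shows "(\<Sum>j\<in>S. complex_of_real (pfc lam S j) / (complex_of_real (lam j) - s))
       = (\<Prod>l\<in>S. complex_of_real (lam l) / (complex_of_real (lam l) - s))"
proof -
  have inj: "inj_on (\<lambda>i. complex_of_real (lam i)) S"
    using assms(3) by (auto simp: inj_on_def)
  have ne: "\<forall>i\<in>S. complex_of_real (lam i) \<noteq> s"
    using assms(4) s by auto
  have "(\<Sum>j\<in>S. (\<Prod>i\<in>S. complex_of_real (lam i)) / (\<Prod>k\<in>S-{j}. (complex_of_real (lam k) - complex_of_real (lam j))) / (complex_of_real (lam j) - s))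
       = (\<Prod>l\<in>S. complex_of_real (lam l) / (complex_of_real (lam l) - s))"
    by (rule pf_identity[OF assms(1,2) inj ne])
  moreover have "\<And>j. complex_of_real (pfc lam S j) = (\<Prod>i\<in>S. complex_of_real (lam i)) / (\<Prod>k\<in>S-{j}. (complex_of_real (lam k) - complex_of_real (lam j)))"
    by (simp add: pfc_def)
  ultimately show ?thesis by simp
qed

lemma pf_final:
  fixes t :: real
  assumes S: "finite S" "S \<noteq> {}" "inj_on lam S" "\<forall>i\<in>S. lam i > 0"
  shows "(\<Sum>j\<in>S. \<Sum>n\<in>S. pfc lam S j * pfc lam S n / (lam j + lam n) * (2 * lam j / ((lam j)\<^sup>2 + t\<^sup>2)))
       = (\<Prod>l\<in>S. (lam l)\<^sup>2 / ((lam l)\<^sup>2 + t\<^sup>2))"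
proof -
  let ?L = "\<lambda>i. complex_of_real (lam i)"
  let ?a = "\<lambda>j. complex_of_real (pfc lam S j)"
  let ?it = "\<i> * complex_of_real t"
  have pos: "\<And>i. i \<in> S \<Longrightarrow> lam i > 0" using S by auto
  have nz1: "\<And>j. j \<in> S \<Longrightarrow> ?L j - ?it \<noteq> 0"
    using pos by (force simp: complex_eq_iff)
  have nz2: "\<And>j. j \<in> S \<Longrightarrow> ?L j + ?it \<noteq> 0"
    using pos by (force simp: complex_eq_iff)
  have nz3: "\<And>j n. j \<in> S \<Longrightarrow> n \<in> S \<Longrightarrow> ?L j + ?L n \<noteq> 0"
    using pos by (metis add_pos_pos less_irrefl of_real_add of_real_eq_0_iff)
  have P1: "(\<Sum>j\<in>S. ?a j / (?L j - ?it)) = (\<Prod>l\<in>S. ?L l / (?L l - ?it))"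
    by (rule pf_complex[OF S]) simp
  have P2: "(\<Sum>j\<in>S. ?a j / (?L j - (- ?it))) = (\<Prod>l\<in>S. ?L l / (?L l - (- ?it)))"
    by (rule pf_complex[OF S]) simp
  have split: "\<And>j n. j \<in> S \<Longrightarrow> n \<in> S \<Longrightarrow>
      1 / ((?L j - ?it) * (?L n + ?it)) = 1 / (?L j + ?L n) * (1 / (?L j - ?it) + 1 / (?L n + ?it))"
  proof -
    fix j n assume j: "j \<in> S" and n: "n \<in> S"
    show "?thesis j n" using nz1[OF j] nz2[OF n] nz3[OF j n] pos[OF j] pos[OF n]
      by (simp add: divide_simps)
  qed
  have "complex_of_real (\<Prod>l\<in>S. (lam l)\<^sup>2 / ((lam l)\<^sup>2 + t\<^sup>2))
      = (\<Prod>l\<in>S. ?L l / (?L l - ?it) * (?L l / (?L l + ?it)))"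
  proof (simp only: of_real_prod, rule prod.cong[OF refl])
    fix l assume l: "l \<in> S"
    have "(?L l - ?it) * (?L l + ?it) = complex_of_real ((lam l)\<^sup>2 + t\<^sup>2)"
      by (simp add: algebra_simps power2_eq_square)
    then show "complex_of_real ((lam l)\<^sup>2 / ((lam l)\<^sup>2 + t\<^sup>2)) = ?L l / (?L l - ?it) * (?L l / (?L l + ?it))"
      using nz1[OF l] nz2[OF l] by (simp add: divide_simps power2_eq_square)
  qed
  also have "\<dots> = (\<Sum>j\<in>S. ?a j / (?L j - ?it)) * (\<Sum>n\<in>S. ?a n / (?L n + ?it))"
    using P1 P2 by (simp only: prod.distrib[symmetric] diff_minus_eq_add)
  also have "\<dots> = (\<Sum>j\<in>S. \<Sum>n\<in>S. ?a j * ?a n * (1 / ((?L j - ?it) * (?L n + ?it))))"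
    by (simp add: sum_product)
  also have "\<dots> = (\<Sum>j\<in>S. \<Sum>n\<in>S. ?a j * ?a n / (?L j + ?L n) * (1 / (?L j - ?it)))
      + (\<Sum>j\<in>S. \<Sum>n\<in>S. ?a j * ?a n / (?L j + ?L n) * (1 / (?L n + ?it)))"
    unfolding sum.distrib[symmetric]
  proof (intro sum.cong refl)
    fix j n assume j: "j \<in> S" and n: "n \<in> S"
    show "?a j * ?a n * (1 / ((?L j - ?it) * (?L n + ?it))) =
      ?a j * ?a n / (?L j + ?L n) * (1 / (?L j - ?it)) + ?a j * ?a n / (?L j + ?L n) * (1 / (?L n + ?it))"
      unfolding split[OF j n] by (simp add: algebra_simps)
  qed
  also have "(\<Sum>j\<in>S. \<Sum>n\<in>S. ?a j * ?a n / (?L j + ?L n) * (1 / (?L n + ?it)))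
      = (\<Sum>j\<in>S. \<Sum>n\<in>S. ?a j * ?a n / (?L j + ?L n) * (1 / (?L j + ?it)))"
    by (subst sum.swap) (simp add: algebra_simps)
  also have "(\<Sum>j\<in>S. \<Sum>n\<in>S. ?a j * ?a n / (?L j + ?L n) * (1 / (?L j - ?it)))
      + (\<Sum>j\<in>S. \<Sum>n\<in>S. ?a j * ?a n / (?L j + ?L n) * (1 / (?L j + ?it)))
      = (\<Sum>j\<in>S. \<Sum>n\<in>S. ?a j * ?a n / (?L j + ?L n) * (1 / (?L j - ?it) + 1 / (?L j + ?it)))"
    by (simp add: sum.distrib[symmetric] algebra_simps)
  also have "\<dots> = complex_of_real (\<Sum>j\<in>S. \<Sum>n\<in>S. pfc lam S j * pfc lam S n / (lam j + lam n) * (2 * lam j / ((lam j)\<^sup>2 + t\<^sup>2)))"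
  proof (simp only: of_real_sum, intro sum.cong refl)
    fix j n assume j: "j \<in> S" and n: "n \<in> S"
    have "1 / (?L j - ?it) + 1 / (?L j + ?it) = complex_of_real (2 * lam j / ((lam j)\<^sup>2 + t\<^sup>2))"
    proof -
      have pr: "(?L j - ?it) * (?L j + ?it) = complex_of_real ((lam j)\<^sup>2 + t\<^sup>2)"
        by (simp add: algebra_simps power2_eq_square)
      have "1 / (?L j - ?it) + 1 / (?L j + ?it) = (1 * (?L j + ?it) + 1 * (?L j - ?it)) / ((?L j - ?it) * (?L j + ?it))"
        by (rule add_frac_eq[OF nz1[OF j] nz2[OF j]])
      also have "\<dots> = complex_of_real (2 * lam j) / complex_of_real ((lam j)\<^sup>2 + t\<^sup>2)"
        unfolding pr by simp
      finally show ?thesis by simp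
    qed
    then show "?a j * ?a n / (?L j + ?L n) * (1 / (?L j - ?it) + 1 / (?L j + ?it))
      = complex_of_real (pfc lam S j * pfc lam S n / (lam j + lam n) * (2 * lam j / ((lam j)\<^sup>2 + t\<^sup>2)))"
      by simp
  qed
  finally show ?thesis by (simp only: of_real_eq_iff)
qed

lemma (in prob_space) char_normal_rv:
  assumes X: "distributed M lborel X (\<lambda>t. ennreal (normal_density 0 s t))" and s: "s > 0"
  shows "(CLINT \<omega>|M. iexp (\<tau> * X \<omega>)) = complex_of_real (exp (- (s\<^sup>2 * \<tau>\<^sup>2) / 2))"
proof -
  have Y: "distributed M lborel (\<lambda>x. (X x - 0) / s) (\<lambda>t. ennreal (std_normal_density t))"
    using normal_standard_normal_convert[OF s, of X 0] X by simp
  have [measurable]: "X \<in> borel_measurable M"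
    using distributed_measurable[OF X] by simp
  have "char std_normal_distribution (\<tau> * s) = (CLINT x|distr M lborel (\<lambda>x. (X x - 0) / s). iexp (\<tau> * s * x))"
    unfolding char_def using distributed_distr_eq_density[OF Y] by simp
  also have "\<dots> = (CLINT \<omega>|M. iexp (\<tau> * s * ((X \<omega> - 0) / s)))"
    by (subst integral_distr) auto
  also have "\<dots> = (CLINT \<omega>|M. iexp (\<tau> * X \<omega>))"
    using s by simp
  finally show ?thesis
    unfolding char_std_normal_distribution by (simp add: power_mult_distrib mult.commute)
qed

lemma normal_density_gauss_mult:
  assumes s: "s > 0" and k: "k \<ge> 0"
  shows "normal_density 0 s x * exp (- k * x\<^sup>2)
       = 1 / sqrt (1 + 2 * k * s\<^sup>2) * normal_density 0 (s / sqrt (1 + 2 * k * s\<^sup>2)) x"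
proof -
  define q where "q = 1 + 2 * k * s\<^sup>2"
  have q: "q > 0" using s k unfolding q_def by (simp add: add_pos_nonneg)
  have sq: "(s / sqrt q)\<^sup>2 = s\<^sup>2 / q" using q by (simp add: power_divide)
  have ar: "- (x - 0)\<^sup>2 / (2 * s\<^sup>2) + - k * x\<^sup>2 = - (x - 0)\<^sup>2 / (2 * (s / sqrt q)\<^sup>2)"
    unfolding sq using s q by (simp add: q_def field_simps)
  have e: "exp (- (x - 0)\<^sup>2 / (2 * s\<^sup>2)) * exp (- k * x\<^sup>2) = exp (- (x - 0)\<^sup>2 / (2 * (s / sqrt q)\<^sup>2))"
    unfolding exp_add[symmetric] ar ..
  have r: "sqrt (2 * pi * (s / sqrt q)\<^sup>2) = sqrt (2 * pi * s\<^sup>2) / sqrt q"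
    using q by (simp add: power_divide real_sqrt_divide real_sqrt_mult)
  have pz: "sqrt (2 * pi * s\<^sup>2) > 0" using s by simp
  have "normal_density 0 s x * exp (- k * x\<^sup>2) = 1 / sqrt (2 * pi * s\<^sup>2) * (exp (- (x - 0)\<^sup>2 / (2 * s\<^sup>2)) * exp (- k * x\<^sup>2))"
    unfolding normal_density_def by simp
  also have "\<dots> = 1 / sqrt (2 * pi * s\<^sup>2) * exp (- (x - 0)\<^sup>2 / (2 * (s / sqrt q)\<^sup>2))"
    unfolding e ..
  also have "\<dots> = 1 / sqrt q * (1 / sqrt (2 * pi * (s / sqrt q)\<^sup>2) * exp (- (x - 0)\<^sup>2 / (2 * (s / sqrt q)\<^sup>2)))"
    unfolding r using q pz by simp
  also have "\<dots> = 1 / sqrt q * normal_density 0 (s / sqrt q) x"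
    unfolding normal_density_def ..
  finally show ?thesis unfolding q_def .
qed

lemma (in prob_space) gauss_expect_normal:
  assumes X: "distributed M lborel X (\<lambda>t. ennreal (normal_density 0 s t))" and s: "s > 0" and k: "k \<ge> 0"
  shows "(\<integral>\<omega>. exp (- k * (X \<omega>)\<^sup>2) \<partial>M) = 1 / sqrt (1 + 2 * k * s\<^sup>2)"
proof -
  have "(\<integral>\<omega>. exp (- k * (X \<omega>)\<^sup>2) \<partial>M) = (\<integral>x. normal_density 0 s x * exp (- k * x\<^sup>2) \<partial>lborel)"
    by (rule distributed_integral[OF X, symmetric]) auto
  also have "\<dots> = (\<integral>x. 1 / sqrt (1 + 2 * k * s\<^sup>2) * normal_density 0 (s / sqrt (1 + 2 * k * s\<^sup>2)) x \<partial>lborel)"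
    using normal_density_gauss_mult[OF s k] by simp
  also have "\<dots> = 1 / sqrt (1 + 2 * k * s\<^sup>2) * (\<integral>x. normal_density 0 (s / sqrt (1 + 2 * k * s\<^sup>2)) x \<partial>lborel)"
    by (rule integral_mult_right_zero)
  also have "\<dots> = 1 / sqrt (1 + 2 * k * s\<^sup>2)"
  proof -
    have "s / sqrt (1 + 2 * k * s\<^sup>2) > 0" using s k by (simp add: add_pos_nonneg)
    then show ?thesis using integral_normal_density[of "s / sqrt (1 + 2 * k * s\<^sup>2)" 0] by simp
  qed
  finally show ?thesis .
qed

lemma (in prob_space) integrable_iexp_real:
  fixes g :: "'a \<Rightarrow> real"
  assumes "g \<in> borel_measurable M"
  shows "integrable M (\<lambda>x. iexp (g x))"
  by (rule integrable_iexp) (use assms in auto)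

lemma (in prob_space) CN_char_inner:
  assumes h: "CN_rv M s2 h" and s2: "s2 > 0"
  shows "(CLINT \<omega>|M. iexp (t * Re (h \<omega> * c))) = complex_of_real (exp (- (s2 * t\<^sup>2 / 4) * (cmod c)\<^sup>2))"
proof -
  have hm[measurable]: "h \<in> borel_measurable M" using h unfolding CN_rv_def by auto
  have dRe: "distributed M lborel (\<lambda>\<omega>. Re (h \<omega>)) (\<lambda>t. ennreal (normal_density 0 (sqrt (s2 / 2)) t))"
    and dIm: "distributed M lborel (\<lambda>\<omega>. Im (h \<omega>)) (\<lambda>t. ennreal (normal_density 0 (sqrt (s2 / 2)) t))"
    and ind: "indep_var borel (\<lambda>\<omega>. Re (h \<omega>)) borel (\<lambda>\<omega>. Im (h \<omega>))"
    using h unfolding CN_rv_def by auto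
  have sp: "sqrt (s2 / 2) > 0" using s2 by simp
  have sq: "(sqrt (s2 / 2))\<^sup>2 = s2 / 2" using s2 by simp
  have ind2: "indep_var borel ((\<lambda>r. iexp ((t * Re c) * r)) \<circ> (\<lambda>\<omega>. Re (h \<omega>)))
                        borel ((\<lambda>r. iexp ((- t * Im c) * r)) \<circ> (\<lambda>\<omega>. Im (h \<omega>)))"
    by (rule indep_var_compose[OF ind]) auto
  have "(CLINT \<omega>|M. iexp (t * Re (h \<omega> * c))) =
        (CLINT \<omega>|M. iexp ((t * Re c) * Re (h \<omega>)) * iexp ((- t * Im c) * Im (h \<omega>)))"
    by (intro Bochner_Integration.integral_cong refl)
       (simp add: exp_add[symmetric] algebra_simps)
  also have "\<dots> = (CLINT \<omega>|M. iexp ((t * Re c) * Re (h \<omega>))) * (CLINT \<omega>|M. iexp ((- t * Im c) * Im (h \<omega>)))"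
    by (rule indep_var_lebesgue_integral[OF ind2[unfolded comp_def]])
       (rule integrable_iexp_real; simp)+
  also have "\<dots> = complex_of_real (exp (- ((sqrt (s2 / 2))\<^sup>2 * (t * Re c)\<^sup>2) / 2)) *
                  complex_of_real (exp (- ((sqrt (s2 / 2))\<^sup>2 * (- t * Im c)\<^sup>2) / 2))"
    by (simp only: char_normal_rv[OF dRe sp] char_normal_rv[OF dIm sp])
  also have "\<dots> = complex_of_real (exp (- (s2 * t\<^sup>2 / 4) * (cmod c)\<^sup>2))"
    unfolding sq of_real_mult[symmetric] exp_add[symmetric] cmod_power2
    by (simp add: algebra_simps power_mult_distrib)
  finally show ?thesis .
qed

lemma (in prob_space) CN_gauss_expect:
  assumes x: "CN_rv M s2 x" and s2: "s2 > 0" and k: "k \<ge> 0"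
  shows "(\<integral>\<omega>. exp (- k * (cmod (x \<omega>))\<^sup>2) \<partial>M) = 1 / (1 + k * s2)"
proof -
  have xm[measurable]: "x \<in> borel_measurable M" using x unfolding CN_rv_def by auto
  have dRe: "distributed M lborel (\<lambda>\<omega>. Re (x \<omega>)) (\<lambda>t. ennreal (normal_density 0 (sqrt (s2 / 2)) t))"
    and dIm: "distributed M lborel (\<lambda>\<omega>. Im (x \<omega>)) (\<lambda>t. ennreal (normal_density 0 (sqrt (s2 / 2)) t))"
    and ind: "indep_var borel (\<lambda>\<omega>. Re (x \<omega>)) borel (\<lambda>\<omega>. Im (x \<omega>))"
    using x unfolding CN_rv_def by auto
  have sp: "sqrt (s2 / 2) > 0" using s2 by simp
  have sq: "(sqrt (s2 / 2))\<^sup>2 = s2 / 2" using s2 by simp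
  have ind2: "indep_var borel ((\<lambda>r. exp (- k * r\<^sup>2)) \<circ> (\<lambda>\<omega>. Re (x \<omega>)))
                        borel ((\<lambda>r. exp (- k * r\<^sup>2)) \<circ> (\<lambda>\<omega>. Im (x \<omega>)))"
    by (rule indep_var_compose[OF ind]) auto
  have bnd: "\<And>g. g \<in> borel_measurable M \<Longrightarrow> integrable M (\<lambda>\<omega>. exp (- k * (g \<omega>)\<^sup>2))"
  proof -
    fix g :: "'a \<Rightarrow> real" assume [measurable]: "g \<in> borel_measurable M"
    show "integrable M (\<lambda>\<omega>. exp (- k * (g \<omega>)\<^sup>2))"
      by (rule integrable_const_bound[where B=1]) (use k in \<open>auto simp: mult_nonneg_nonneg\<close>)
  qed
  have "(\<integral>\<omega>. exp (- k * (cmod (x \<omega>))\<^sup>2) \<partial>M) = (\<integral>\<omega>. exp (- k * (Re (x \<omega>))\<^sup>2) * exp (- k * (Im (x \<omega>))\<^sup>2) \<partial>M)"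
    by (intro Bochner_Integration.integral_cong refl) (simp add: cmod_power2 exp_add[symmetric] algebra_simps)
  also have "\<dots> = (\<integral>\<omega>. exp (- k * (Re (x \<omega>))\<^sup>2) \<partial>M) * (\<integral>\<omega>. exp (- k * (Im (x \<omega>))\<^sup>2) \<partial>M)"
    by (rule indep_var_lebesgue_integral[OF ind2[unfolded comp_def]]) (rule bnd; simp)+
  also have "\<dots> = 1 / sqrt (1 + 2 * k * (sqrt (s2 / 2))\<^sup>2) * (1 / sqrt (1 + 2 * k * (sqrt (s2 / 2))\<^sup>2))"
    by (simp only: gauss_expect_normal[OF dRe sp k] gauss_expect_normal[OF dIm sp k])
  also have "\<dots> = 1 / (1 + k * s2)"
    unfolding sq using k s2 by (simp add: add_pos_nonneg)
  finally show ?thesis .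
qed

lemma (in prob_space) CN_prod_char:
  assumes h: "CN_rv M sh2 h" and x: "CN_rv M sx2 x" and sh2: "sh2 > 0" and sx2: "sx2 > 0"
    and ind: "indep_var borel h borel x" and u: "cmod u = 1"
  shows "(CLINT \<omega>|M. iexp (t * Re (h \<omega> * (u * x \<omega>)))) = complex_of_real (1 / (1 + t\<^sup>2 * sh2 * sx2 / 4))"
proof -
  have hm[measurable]: "h \<in> borel_measurable M" using h unfolding CN_rv_def by auto
  have xm[measurable]: "x \<in> borel_measurable M" using x unfolding CN_rv_def by auto
  let ?Dh = "distr M borel h" and ?Dx = "distr M borel x"
  interpret Dh: prob_space ?Dh by (rule prob_space_distr) simp
  interpret Dx: prob_space ?Dx by (rule prob_space_distr) simp
  interpret P: pair_prob_space ?Dh ?Dx ..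
  have eq: "?Dh \<Otimes>\<^sub>M ?Dx = distr M (borel \<Otimes>\<^sub>M borel) (\<lambda>\<omega>. (h \<omega>, x \<omega>))"
    using ind unfolding indep_var_distribution_eq by auto
  let ?f = "\<lambda>a b. iexp (t * Re (a * (u * b)))"
  have fm[measurable]: "case_prod ?f \<in> borel_measurable (?Dh \<Otimes>\<^sub>M ?Dx)"
    by simp
  have fint: "integrable (?Dh \<Otimes>\<^sub>M ?Dx) (case_prod ?f)"
    by (rule P.integrable_const_bound[where B=1]) (auto simp: norm_exp_i_times)
  have k: "sh2 * t\<^sup>2 / 4 \<ge> 0" using sh2 by simp
  have "(CLINT \<omega>|M. iexp (t * Re (h \<omega> * (u * x \<omega>)))) = (CLINT p|distr M (borel \<Otimes>\<^sub>M borel) (\<lambda>\<omega>. (h \<omega>, x \<omega>)). case_prod ?f p)"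
    by (subst integral_distr) auto
  also have "\<dots> = (CLINT p|?Dh \<Otimes>\<^sub>M ?Dx. case_prod ?f p)"
    unfolding eq ..
  also have "\<dots> = (CLINT b|?Dx. (CLINT a|?Dh. ?f a b))"
    by (rule P.integral_snd[OF fint, symmetric])
  also have "\<dots> = (CLINT b|?Dx. complex_of_real (exp (- (sh2 * t\<^sup>2 / 4) * (cmod b)\<^sup>2)))"
  proof (intro Bochner_Integration.integral_cong refl)
    fix b
    have "(CLINT a|?Dh. ?f a b) = (CLINT \<omega>|M. iexp (t * Re (h \<omega> * (u * b))))"
      by (subst integral_distr) auto
    also have "\<dots> = complex_of_real (exp (- (sh2 * t\<^sup>2 / 4) * (cmod (u * b))\<^sup>2))"
      by (rule CN_char_inner[OF h sh2])
    finally show "(CLINT a|?Dh. ?f a b) = complex_of_real (exp (- (sh2 * t\<^sup>2 / 4) * (cmod b)\<^sup>2))"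
      using u by (simp add: norm_mult)
  qed
  also have "\<dots> = complex_of_real (\<integral>\<omega>. exp (- (sh2 * t\<^sup>2 / 4) * (cmod (x \<omega>))\<^sup>2) \<partial>M)"
    by (subst integral_complex_of_real) (subst integral_distr; simp)
  also have "\<dots> = complex_of_real (1 / (1 + (sh2 * t\<^sup>2 / 4) * sx2))"
    by (simp only: CN_gauss_expect[OF x sx2 k])
  finally show ?thesis by (simp add: algebra_simps)
qed

lemma gauss_integrable: "integrable lborel (\<lambda>x::real. exp (- x\<^sup>2))"
proof -
  have s: "sqrt (1/2) > (0::real)" by simp
  have "integrable lborel (\<lambda>x. sqrt pi * normal_density 0 (sqrt (1/2)) x)"
    using integrable_normal_density[OF s] by simp
  moreover have "\<And>x. sqrt pi * normal_density 0 (sqrt (1/2)) x = exp (- x\<^sup>2)"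
  proof -
    fix x :: real
    have a: "(sqrt (1/2))\<^sup>2 = (1/2::real)" by simp
    show "sqrt pi * normal_density 0 (sqrt (1/2)) x = exp (- x\<^sup>2)"
      unfolding normal_density_def a by simp
  qed
  ultimately show ?thesis by simp
qed

lemma gauss_set_integrable: "set_integrable lborel A (\<lambda>x::real. exp (- x\<^sup>2))" if "A \<in> sets borel"
  unfolding set_integrable_def using that by (intro integrable_mult_indicator gauss_integrable) auto

lemma gauss_half: "(LBINT u:{0<..}. exp (- (u::real)\<^sup>2)) = sqrt pi / 2"
proof -
  have ae: "AE x in lborel. indicator {0<..} x *\<^sub>R exp (- x\<^sup>2) = indicator {0..} x *\<^sub>R (exp (- x\<^sup>2)::real)"
    using AE_lborel_singleton[of "0::real"] by eventually_elim (auto split: split_indicator)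
  have "(LBINT u:{0<..}. exp (- (u::real)\<^sup>2)) = (\<integral>x. indicator {0..} x *\<^sub>R exp (- x\<^sup>2) \<partial>lborel)"
    unfolding set_lebesgue_integral_def by (rule integral_cong_AE[OF _ _ ae]) measurable
  also have "\<dots> = sqrt pi / 2"
    using gaussian_moment_0 by (rule has_bochner_integral_integral_eq)
  finally show ?thesis .
qed

lemma erf_tail: "(LBINT u:{w<..}. exp (- (u::real)\<^sup>2)) = sqrt pi / 2 * (1 - erf w)"
proof -
  have int: "interval_lebesgue_integrable lborel a b (\<lambda>u::real. exp (- u\<^sup>2))" for a b
    unfolding interval_lebesgue_integrable_def by (auto intro: gauss_set_integrable)
  have "(LBINT u=ereal 0..ereal w. exp (- u\<^sup>2)) + (LBINT u=ereal w..\<infinity>. exp (- u\<^sup>2)) = (LBINT u=ereal 0..\<infinity>. exp (- u\<^sup>2))"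
    by (rule interval_integral_sum) (rule int)
  moreover have "(LBINT u=ereal w..\<infinity>. exp (- u\<^sup>2)) = (LBINT u:{w<..}. exp (- (u::real)\<^sup>2))"
    by (subst interval_integral_Ioi) auto
  moreover have "(LBINT u=ereal 0..\<infinity>. exp (- u\<^sup>2)) = sqrt pi / 2"
    by (subst interval_integral_Ioi) (auto simp: gauss_half)
  moreover have "erf w = 2 / sqrt pi * (LBINT u=ereal 0..ereal w. exp (- u\<^sup>2))"
    unfolding erf_def by (simp add: zero_ereal_def)
  ultimately show ?thesis
    by (simp add: algebra_simps)
qed

lemma erf_tail_nn:
  "(\<integral>\<^sup>+u. ennreal (indicator {w<..} u * exp (- u\<^sup>2)) \<partial>lborel) = ennreal (sqrt pi / 2 * (1 - erf w))"
proof -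
  have "(\<integral>\<^sup>+u. ennreal (indicator {w<..} u * exp (- u\<^sup>2)) \<partial>lborel) = ennreal (\<integral>u. indicator {w<..} u * exp (- u\<^sup>2) \<partial>lborel)"
    by (rule nn_integral_eq_integral)
       (use gauss_set_integrable[of "{w<..}"] in \<open>auto simp: set_integrable_def\<close>)
  also have "(\<integral>u. indicator {w<..} u * exp (- u\<^sup>2) \<partial>lborel) = (LBINT u:{w<..}. exp (- (u::real)\<^sup>2))"
    unfolding set_lebesgue_integral_def by simp
  finally show ?thesis by (simp add: erf_tail)
qed

lemma erf_tail_nn':
  "(\<integral>\<^sup>+u. ennreal (indicator {w..} u * exp (- u\<^sup>2)) \<partial>lborel) = ennreal (sqrt pi / 2 * (1 - erf w))"
proof -
  have "(\<integral>\<^sup>+u. ennreal (indicator {w..} u * exp (- u\<^sup>2)) \<partial>lborel) = (\<integral>\<^sup>+u. ennreal (indicator {w<..} u * exp (- u\<^sup>2)) \<partial>lborel)"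
    by (rule nn_integral_cong_AE)
       (use AE_lborel_singleton[of "w::real"] in \<open>eventually_elim, auto split: split_indicator\<close>)
  then show ?thesis by (simp add: erf_tail_nn)
qed

lemma erf_le_1: "erf w \<le> 1"
proof -
  have "0 \<le> (LBINT u:{w<..}. exp (- (u::real)\<^sup>2))"
    unfolding set_lebesgue_integral_def by (rule integral_nonneg_AE) (auto split: split_indicator)
  then have "0 \<le> sqrt pi / 2 * (1 - erf w)" by (simp add: erf_tail)
  then show ?thesis using pi_gt_zero by (auto simp: zero_le_mult_iff)
qed

definition lapd :: "real \<Rightarrow> real \<Rightarrow> real" where
  "lapd l x = l / 2 * exp (- l * \<bar>x\<bar>)"

lemma lapd_measurable[measurable]: "lapd l \<in> borel_measurable borel"
  unfolding lapd_def by simp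

definition Qf :: "real \<Rightarrow> real \<Rightarrow> real \<Rightarrow> real" where
  "Qf l sw y = exp ((l * sw / 2)\<^sup>2) * (1 / 2) * (exp (- l * y) * (1 - erf (l * sw / 2 - y / sw))
                     + exp (l * y) * (1 - erf (l * sw / 2 + y / sw)))"

lemma nd_eq: "sw > 0 \<Longrightarrow> normal_density 0 (sqrt (sw\<^sup>2 / 2)) v = 1 / (sqrt pi * sw) * exp (- v\<^sup>2 / sw\<^sup>2)"
  by (simp add: normal_density_def real_sqrt_mult)

lemma tail_open:
  assumes sw: "sw > 0"
  shows "(\<integral>\<^sup>+v. ennreal (indicator {y<..} v * exp (- l * (v - y)) * normal_density 0 (sqrt (sw\<^sup>2 / 2)) v) \<partial>lborel)
       = ennreal (exp (l * y) * exp ((l * sw / 2)\<^sup>2) * (1 / 2) * (1 - erf (l * sw / 2 + y / sw)))"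
proof -
  define t where "t = - l * sw\<^sup>2 / 2"
  define w where "w = y / sw + l * sw / 2"
  define C where "C = exp (l * y) * exp ((l * sw / 2)\<^sup>2) / (sqrt pi * sw)"
  have C: "C \<ge> 0" using sw unfolding C_def by simp
  have pt: "indicator {y<..} (t + sw * u) * exp (- l * ((t + sw * u) - y)) * normal_density 0 (sqrt (sw\<^sup>2 / 2)) (t + sw * u)
      = C * (indicator {w<..} u * exp (- u\<^sup>2))" for u
  proof -
    have ind: "indicator {y<..} (t + sw * u) = (indicator {w<..} u :: real)"
    proof -
      have "(y < t + sw * u) = (w < u)"
        using sw unfolding t_def w_def by (simp add: field_simps power2_eq_square)
      then show ?thesis by (simp add: indicator_def)
    qed
    have ex: "- l * ((t + sw * u) - y) + - (t + sw * u)\<^sup>2 / sw\<^sup>2 = l * y + (l * sw / 2)\<^sup>2 + - u\<^sup>2"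
      using sw unfolding t_def by (simp add: field_simps power2_eq_square)
    have "exp (- l * ((t + sw * u) - y)) * exp (- (t + sw * u)\<^sup>2 / sw\<^sup>2) = exp (l * y) * exp ((l * sw / 2)\<^sup>2) * exp (- u\<^sup>2)"
      by (simp only: exp_add[symmetric] ex)
    then show ?thesis
      unfolding ind nd_eq[OF sw] C_def by (simp add: field_simps)
  qed
  have "(\<integral>\<^sup>+v. ennreal (indicator {y<..} v * exp (- l * (v - y)) * normal_density 0 (sqrt (sw\<^sup>2 / 2)) v) \<partial>lborel)
      = ennreal \<bar>sw\<bar> * (\<integral>\<^sup>+u. ennreal (indicator {y<..} (t + sw * u) * exp (- l * ((t + sw * u) - y)) * normal_density 0 (sqrt (sw\<^sup>2 / 2)) (t + sw * u)) \<partial>lborel)"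
    using sw by (intro nn_integral_real_affine) auto
  also have "\<dots> = ennreal sw * (\<integral>\<^sup>+u. ennreal (C * (indicator {w<..} u * exp (- u\<^sup>2))) \<partial>lborel)"
    using sw by (simp only: pt abs_of_pos)
  also have "\<dots> = ennreal sw * (\<integral>\<^sup>+u. ennreal C * ennreal (indicator {w<..} u * exp (- u\<^sup>2)) \<partial>lborel)"
    by (simp only: ennreal_mult'[OF C])
  also have "\<dots> = ennreal sw * (ennreal C * (\<integral>\<^sup>+u. ennreal (indicator {w<..} u * exp (- u\<^sup>2)) \<partial>lborel))"
    by (subst nn_integral_cmult) auto
  also have "\<dots> = ennreal sw * (ennreal C * ennreal (sqrt pi / 2 * (1 - erf w)))"
    by (simp only: erf_tail_nn)
  also have "\<dots> = ennreal (sw * (C * (sqrt pi / 2 * (1 - erf w))))"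
  proof -
    have Z: "sqrt pi / 2 * (1 - erf w) \<ge> 0" using erf_le_1[of w] by simp
    have 1: "ennreal C * ennreal (sqrt pi / 2 * (1 - erf w)) = ennreal (C * (sqrt pi / 2 * (1 - erf w)))"
      using ennreal_mult[OF C Z] by simp
    have 2: "ennreal sw * ennreal (C * (sqrt pi / 2 * (1 - erf w))) = ennreal (sw * (C * (sqrt pi / 2 * (1 - erf w))))"
      using ennreal_mult[of sw "C * (sqrt pi / 2 * (1 - erf w))"] sw C Z by simp
    show ?thesis unfolding 1 2 ..
  qed
  also have "sw * (C * (sqrt pi / 2 * (1 - erf w))) = exp (l * y) * exp ((l * sw / 2)\<^sup>2) * (1 / 2) * (1 - erf (l * sw / 2 + y / sw))"
    using sw unfolding C_def w_def by (simp add: field_simps)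
  finally show ?thesis .
qed

lemma tail_closed:
  assumes sw: "sw > 0"
  shows "(\<integral>\<^sup>+v. ennreal (indicator {y..} v * exp (- l * (v - y)) * normal_density 0 (sqrt (sw\<^sup>2 / 2)) v) \<partial>lborel)
       = ennreal (exp (l * y) * exp ((l * sw / 2)\<^sup>2) * (1 / 2) * (1 - erf (l * sw / 2 + y / sw)))"
proof -
  have "(\<integral>\<^sup>+v. ennreal (indicator {y..} v * exp (- l * (v - y)) * normal_density 0 (sqrt (sw\<^sup>2 / 2)) v) \<partial>lborel)
      = (\<integral>\<^sup>+v. ennreal (indicator {y<..} v * exp (- l * (v - y)) * normal_density 0 (sqrt (sw\<^sup>2 / 2)) v) \<partial>lborel)"
    by (rule nn_integral_cong_AE)
       (use AE_lborel_singleton[of "y::real"] in \<open>eventually_elim, auto split: split_indicator\<close>)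
  then show ?thesis using tail_open[OF sw] by simp
qed

lemma tail_left:
  assumes sw: "sw > 0"
  shows "(\<integral>\<^sup>+v. ennreal (indicator {..y} v * exp (- l * (y - v)) * normal_density 0 (sqrt (sw\<^sup>2 / 2)) v) \<partial>lborel)
       = ennreal (exp (- l * y) * exp ((l * sw / 2)\<^sup>2) * (1 / 2) * (1 - erf (l * sw / 2 - y / sw)))"
proof -
  have "(\<integral>\<^sup>+v. ennreal (indicator {..y} v * exp (- l * (y - v)) * normal_density 0 (sqrt (sw\<^sup>2 / 2)) v) \<partial>lborel)
      = ennreal \<bar>-1\<bar> * (\<integral>\<^sup>+u. ennreal (indicator {..y} (0 + -1 * u) * exp (- l * (y - (0 + -1 * u))) * normal_density 0 (sqrt (sw\<^sup>2 / 2)) (0 + -1 * u)) \<partial>lborel)"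
    by (intro nn_integral_real_affine) auto
  also have "\<dots> = (\<integral>\<^sup>+u. ennreal (indicator {-y..} u * exp (- l * (u - (-y))) * normal_density 0 (sqrt (sw\<^sup>2 / 2)) u) \<partial>lborel)"
  proof -
    have "\<And>u. indicator {..y} (0 + -1 * u) = (indicator {-y..} u :: real)"
      by (auto simp: indicator_def)
    moreover have "\<And>u. normal_density 0 (sqrt (sw\<^sup>2 / 2)) (0 + -1 * u) = normal_density 0 (sqrt (sw\<^sup>2 / 2)) u"
      by (simp add: normal_density_def)
    moreover have "\<And>u. - l * (y - (0 + -1 * u)) = - l * (u - (-y))" by simp
    moreover have "ennreal \<bar>-1\<bar> = 1" by simp
    ultimately show ?thesis by (simp only: mult_1)
  qed
  also have "\<dots> = ennreal (exp (l * - y) * exp ((l * sw / 2)\<^sup>2) * (1 / 2) * (1 - erf (l * sw / 2 + - y / sw)))"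
    by (rule tail_closed[OF sw])
  finally show ?thesis by simp
qed

lemma lap_conv:
  assumes sw: "sw > 0" and l: "l > 0"
  shows "(\<integral>\<^sup>+v. ennreal (lapd l (y - v)) * ennreal (normal_density 0 (sqrt (sw\<^sup>2 / 2)) v) \<partial>lborel)
       = ennreal (l / 2 * Qf l sw y)"
proof -
  let ?nd = "normal_density 0 (sqrt (sw\<^sup>2 / 2))"
  have split: "ennreal (lapd l (y - v)) * ennreal (?nd v)
     = ennreal (l / 2) * (ennreal (indicator {..y} v * exp (- l * (y - v)) * ?nd v)
                        + ennreal (indicator {y<..} v * exp (- l * (v - y)) * ?nd v))" for v
  proof -
    have "lapd l (y - v) * ?nd v = l / 2 * (indicator {..y} v * exp (- l * (y - v)) * ?nd v
                        + indicator {y<..} v * exp (- l * (v - y)) * ?nd v)"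
      unfolding lapd_def by (auto simp: indicator_def abs_if algebra_simps)
    moreover have a: "lapd l (y - v) \<ge> 0" using l unfolding lapd_def by simp
    moreover have b: "?nd v \<ge> 0" by simp
    moreover have c: "indicator {..y} v * exp (- l * (y - v)) * ?nd v \<ge> 0" by simp
    moreover have d: "indicator {y<..} v * exp (- l * (v - y)) * ?nd v \<ge> 0" by simp
    ultimately show ?thesis
      using l
      by (metis ennreal_mult ennreal_plus add_nonneg_nonneg divide_nonneg_nonneg less_imp_le zero_le_numeral)
  qed
  have "(\<integral>\<^sup>+v. ennreal (lapd l (y - v)) * ennreal (?nd v) \<partial>lborel)
      = ennreal (l / 2) * ((\<integral>\<^sup>+v. ennreal (indicator {..y} v * exp (- l * (y - v)) * ?nd v) \<partial>lborel)
                        + (\<integral>\<^sup>+v. ennreal (indicator {y<..} v * exp (- l * (v - y)) * ?nd v) \<partial>lborel))"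
    unfolding split by (simp add: nn_integral_cmult nn_integral_add)
  also have "\<dots> = ennreal (l / 2) * (ennreal (exp (- l * y) * exp ((l * sw / 2)\<^sup>2) * (1 / 2) * (1 - erf (l * sw / 2 - y / sw)))
         + ennreal (exp (l * y) * exp ((l * sw / 2)\<^sup>2) * (1 / 2) * (1 - erf (l * sw / 2 + y / sw))))"
    by (simp only: tail_left[OF sw] tail_open[OF sw])
  also have "\<dots> = ennreal (l / 2 * Qf l sw y)"
  proof -
    let ?X = "exp (- l * y) * exp ((l * sw / 2)\<^sup>2) * (1 / 2) * (1 - erf (l * sw / 2 - y / sw))"
    let ?Y = "exp (l * y) * exp ((l * sw / 2)\<^sup>2) * (1 / 2) * (1 - erf (l * sw / 2 + y / sw))"
    have X: "?X \<ge> 0" using erf_le_1[of "l * sw / 2 - y / sw"] by simp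
    have Y: "?Y \<ge> 0" using erf_le_1[of "l * sw / 2 + y / sw"] by simp
    have 1: "ennreal ?X + ennreal ?Y = ennreal (?X + ?Y)" using ennreal_plus[OF X Y] by simp
    have 2: "ennreal (l / 2) * ennreal (?X + ?Y) = ennreal (l / 2 * (?X + ?Y))"
      using ennreal_mult[of "l / 2" "?X + ?Y"] X Y l by simp
    have "ennreal (l / 2) * (ennreal ?X + ennreal ?Y) = ennreal (l / 2 * (?X + ?Y))"
      unfolding 1 2 ..
    also have "l / 2 * (?X + ?Y) = l / 2 * Qf l sw y"
      unfolding Qf_def by (simp add: field_simps)
    finally show ?thesis .
  qed
  finally show ?thesis .
qed

lemma deriv_cexp_div:
  fixes z :: complex
  assumes "z \<noteq> 0"
  shows "((\<lambda>x::real. exp (z * of_real x) / z) has_vector_derivative exp (z * of_real x)) (at x within A)"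
  apply (rule has_vector_derivative_real_field[where f="\<lambda>w. exp (z * w) / z"])
  apply (rule DERIV_cong)
  apply (rule derivative_eq_intros | use assms in simp)+
  done

lemma integral_FTC_Ici:
  fixes f F :: "real \<Rightarrow> complex"
  assumes int: "integrable lborel (\<lambda>x. indicator {a..} x *\<^sub>R f x)"
    and der: "\<And>x. a \<le> x \<Longrightarrow> (F has_vector_derivative f x) (at x)"
    and cont: "\<And>x. a \<le> x \<Longrightarrow> isCont f x"
    and lim: "(F \<longlongrightarrow> T) at_top"
  shows "integral\<^sup>L lborel (\<lambda>x. indicator {a..} x *\<^sub>R f x) = T - F a"
proof -
  let ?s = "\<lambda>n::nat. \<lambda>x. indicator {a..a + real n} x *\<^sub>R f x"
  have fm: "(\<lambda>x. indicator {a..} x *\<^sub>R f x) \<in> borel_measurable lborel"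
    using int by (rule borel_measurable_integrable)
  have sm: "?s n \<in> borel_measurable lborel" for n
  proof -
    have e: "?s n = (\<lambda>x. indicator {a..a + real n} x *\<^sub>R (indicator {a..} x *\<^sub>R f x))"
      by (auto simp: fun_eq_iff split: split_indicator)
    show ?thesis unfolding e by (rule borel_measurable_scaleR[OF _ fm]) simp
  qed
  have eq: "integral\<^sup>L lborel (?s n) = F (a + real n) - F a" for n
  proof -
    have "integral\<^sup>L lborel (\<lambda>x. indicator {a .. a + real n} x *\<^sub>R f x) = F (a + real n) - F a"
    proof (rule integral_FTC_atLeastAtMost)
      show "a \<le> a + real n" by simp
      show "\<And>x. a \<le> x \<Longrightarrow> x \<le> a + real n \<Longrightarrow> (F has_vector_derivative f x) (at x within {a..a + real n})"
        using der by (blast intro: has_vector_derivative_at_within)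
      show "continuous_on {a..a + real n} f"
        using cont by (intro continuous_at_imp_continuous_on) auto
    qed
    then show ?thesis by simp
  qed
  have "(\<lambda>n. integral\<^sup>L lborel (?s n)) \<longlonglongrightarrow> integral\<^sup>L lborel (\<lambda>x. indicator {a..} x *\<^sub>R f x)"
  proof (rule integral_dominated_convergence[where w="\<lambda>x. norm (indicator {a..} x *\<^sub>R f x)"])
    show "(\<lambda>x. indicator {a..} x *\<^sub>R f x) \<in> borel_measurable lborel" by (rule fm)
    show "\<And>i. ?s i \<in> borel_measurable lborel" by (rule sm)
    show "integrable lborel (\<lambda>x. norm (indicator {a..} x *\<^sub>R f x))" using integrable_norm[OF int] .
    show "AE x in lborel. (\<lambda>i. ?s i x) \<longlonglongrightarrow> indicator {a..} x *\<^sub>R f x"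
    proof (rule AE_I2)
      fix x
      obtain N :: nat where N: "x - a \<le> real N" using real_arch_simple by blast
      have "eventually (\<lambda>i. ?s i x = indicator {a..} x *\<^sub>R f x) sequentially"
        unfolding eventually_sequentially
        by (rule exI[of _ N]) (use N in \<open>auto split: split_indicator\<close>)
      then show "(\<lambda>i. ?s i x) \<longlonglongrightarrow> indicator {a..} x *\<^sub>R f x"
        by (rule tendsto_eventually)
    qed
    show "\<And>i. AE x in lborel. norm (?s i x) \<le> norm (indicator {a..} x *\<^sub>R f x)"
      by (auto split: split_indicator)
  qed
  moreover have "(\<lambda>n. integral\<^sup>L lborel (?s n)) \<longlonglongrightarrow> T - F a"
  proof -
    have "filterlim (\<lambda>n::nat. a + real n) at_top sequentially"
      by (intro filterlim_tendsto_add_at_top[OF tendsto_const] filterlim_real_sequentially)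
    then have "(\<lambda>n. F (a + real n)) \<longlonglongrightarrow> T"
      using lim by (rule filterlim_compose[rotated])
    then show ?thesis unfolding eq by (intro tendsto_intros)
  qed
  ultimately show ?thesis by (rule LIMSEQ_unique)
qed

lemma exp_real_half_line_nn:
  fixes r :: real assumes r: "r < 0"
  shows "(\<integral>\<^sup>+x. ennreal (exp (r * x)) * indicator {0..} x \<partial>lborel) = ennreal (- 1 / r)"
proof -
  have "(\<integral>\<^sup>+x. ennreal (exp (r * x)) * indicator {0..} x \<partial>lborel) = 0 - exp (r * 0) / r"
  proof (rule nn_integral_FTC_atLeast)
    show "(\<lambda>x. exp (r * x)) \<in> borel_measurable borel" by simp
    show "\<And>x. 0 \<le> x \<Longrightarrow> ((\<lambda>x. exp (r * x) / r) has_real_derivative exp (r * x)) (at x)"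
      using r by (auto intro!: derivative_eq_intros)
    show "\<And>x. 0 \<le> x \<Longrightarrow> 0 \<le> exp (r * x)" by simp
    show "((\<lambda>x. exp (r * x) / r) \<longlongrightarrow> 0) at_top"
    proof -
      have "filterlim (\<lambda>x::real. r * x) at_bot at_top"
        using r by (intro filterlim_tendsto_neg_mult_at_bot[OF tendsto_const]) (auto simp: filterlim_ident)
      then have "((\<lambda>x. exp (r * x)) \<longlongrightarrow> 0) at_top"
        by (rule filterlim_compose[OF exp_at_bot])
      from tendsto_divide[OF this tendsto_const[of r]] r show ?thesis by simp
    qed
  qed
  then show ?thesis by simp
qed

lemma exp_half_line:
  fixes z :: complex assumes z: "Re z < 0"
  shows exp_half_line_int: "integrable lborel (\<lambda>x. indicator {0..} x *\<^sub>R exp (z * of_real x))"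
    and exp_half_line_eq: "integral\<^sup>L lborel (\<lambda>x. indicator {0..} x *\<^sub>R exp (z * of_real x)) = - 1 / z"
proof -
  have zn: "z \<noteq> 0" using z by auto
  have "(\<integral>\<^sup>+x. ennreal (exp (Re z * x) * indicator {0..} x) \<partial>lborel) = (\<integral>\<^sup>+x. ennreal (exp (Re z * x)) * indicator {0..} x \<partial>lborel)"
    by (intro nn_integral_cong) (auto split: split_indicator)
  also have "\<dots> = ennreal (- 1 / Re z)" by (rule exp_real_half_line_nn[OF z])
  finally have "integrable lborel (\<lambda>x. exp (Re z * x) * indicator {0..} x)"
    by (intro integrableI_nn_integral_finite) auto
  then show int: "integrable lborel (\<lambda>x. indicator {0..} x *\<^sub>R exp (z * of_real x))"
    by (rule Bochner_Integration.integrable_bound) (auto simp: norm_exp_eq_Re split: split_indicator)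
  have "integral\<^sup>L lborel (\<lambda>x. indicator {0..} x *\<^sub>R exp (z * of_real x)) = 0 - exp (z * of_real 0) / z"
  proof (rule integral_FTC_Ici[OF int])
    show "\<And>x. 0 \<le> x \<Longrightarrow> ((\<lambda>x. exp (z * complex_of_real x) / z) has_vector_derivative exp (z * complex_of_real x)) (at x)"
      using deriv_cexp_div[OF zn] by blast
    show "\<And>x. 0 \<le> x \<Longrightarrow> isCont (\<lambda>x. exp (z * complex_of_real x)) x"
      by (intro continuous_intros)
    show "((\<lambda>x. exp (z * complex_of_real x) / z) \<longlongrightarrow> 0) at_top"
    proof (subst tendsto_norm_zero_iff[symmetric])
      have "filterlim (\<lambda>x::real. Re z * x) at_bot at_top"
        using z by (intro filterlim_tendsto_neg_mult_at_bot[OF tendsto_const]) (auto simp: filterlim_ident)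
      then have "((\<lambda>x. exp (Re z * x)) \<longlongrightarrow> 0) at_top"
        by (rule filterlim_compose[OF exp_at_bot])
      from tendsto_divide[OF this tendsto_const[of "cmod z"]]
      show "((\<lambda>x. norm (exp (z * complex_of_real x) / z)) \<longlongrightarrow> 0) at_top"
        using zn by (simp add: norm_divide norm_exp_eq_Re)
    qed
  qed
  then show "integral\<^sup>L lborel (\<lambda>x. indicator {0..} x *\<^sub>R exp (z * of_real x)) = - 1 / z" by simp
qed

lemma lapd_char:
  assumes l: "l > 0"
  shows lapd_char_int: "integrable lborel (\<lambda>x. lapd l x *\<^sub>R iexp (t * x))"
    and lapd_char_eq: "integral\<^sup>L lborel (\<lambda>x. lapd l x *\<^sub>R iexp (t * x)) = complex_of_real (l\<^sup>2 / (l\<^sup>2 + t\<^sup>2))"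
proof -
  define z1 where "z1 = Complex (- l) t"
  define z2 where "z2 = Complex (- l) (- t)"
  have z1: "Re z1 < 0" and z2: "Re z2 < 0" using l by (auto simp: z1_def z2_def)
  let ?g1 = "\<lambda>x. indicator {0..} x *\<^sub>R exp (z1 * of_real x)"
  let ?g2 = "\<lambda>x. indicator {0..} x *\<^sub>R exp (z2 * of_real x)"
  let ?h2 = "\<lambda>x. ?g2 (0 + -1 * x)"
  have i1: "integrable lborel ?g1" by (rule exp_half_line_int[OF z1])
  have i2: "integrable lborel ?h2"
    using exp_half_line_int[OF z2] lborel_integrable_real_affine_iff[of "-1" ?g2 0] by simp
  have e2: "integral\<^sup>L lborel ?h2 = - 1 / z2"
    using lborel_integral_real_affine[of "-1" ?g2 0] exp_half_line_eq[OF z2] by simp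
  have ae: "AE x in lborel. lapd l x *\<^sub>R iexp (t * x) = (l / 2) *\<^sub>R (?g1 x + ?h2 x)"
    using AE_lborel_singleton[of "0::real"]
  proof eventually_elim
    fix x :: real assume "x \<noteq> 0"
    show "lapd l x *\<^sub>R iexp (t * x) = (l / 2) *\<^sub>R (?g1 x + ?h2 x)"
    proof (cases "x > 0")
      case True
      then have "z1 * of_real x = of_real (- l * \<bar>x\<bar>) + \<i> * of_real (t * x)"
        by (simp add: z1_def complex_eq_iff)
      then have "exp (z1 * of_real x) = exp (of_real (- l * \<bar>x\<bar>)) * iexp (t * x)"
        by (simp only: exp_add)
      then have "exp (z1 * of_real x) = of_real (exp (- l * \<bar>x\<bar>)) * iexp (t * x)"
        by (simp only: exp_of_real)
      then show ?thesis using True by (simp add: lapd_def scaleR_conv_of_real)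
    next
      case False
      with \<open>x \<noteq> 0\<close> have "x < 0" by simp
      then have "z2 * of_real (0 + -1 * x) = of_real (- l * \<bar>x\<bar>) + \<i> * of_real (t * x)"
        by (simp add: z2_def complex_eq_iff)
      then have "exp (z2 * of_real (0 + -1 * x)) = exp (of_real (- l * \<bar>x\<bar>)) * iexp (t * x)"
        by (simp only: exp_add)
      then have "exp (z2 * of_real (0 + -1 * x)) = of_real (exp (- l * \<bar>x\<bar>)) * iexp (t * x)"
        by (simp only: exp_of_real)
      then show ?thesis using \<open>x < 0\<close> by (simp add: lapd_def scaleR_conv_of_real)
    qed
  qed
  have "integrable lborel (\<lambda>x. (l / 2) *\<^sub>R (?g1 x + ?h2 x))"
    using i1 i2 by simp
  then show int: "integrable lborel (\<lambda>x. lapd l x *\<^sub>R iexp (t * x))"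
  proof (rule integrable_cong_AE_imp)
    show "AE x in lborel. (l / 2) *\<^sub>R (?g1 x + ?h2 x) = lapd l x *\<^sub>R iexp (t * x)"
      using ae by eventually_elim simp
  qed measurable
  have "integral\<^sup>L lborel (\<lambda>x. lapd l x *\<^sub>R iexp (t * x)) = integral\<^sup>L lborel (\<lambda>x. (l / 2) *\<^sub>R (?g1 x + ?h2 x))"
  proof (rule integral_cong_AE)
    show "AE x in lborel. lapd l x *\<^sub>R iexp (t * x) = (l / 2) *\<^sub>R (?g1 x + ?h2 x)" by (rule ae)
  qed measurable
  also have "\<dots> = (l / 2) *\<^sub>R (integral\<^sup>L lborel ?g1 + integral\<^sup>L lborel ?h2)"
    using i1 i2 by simp
  also have "\<dots> = (l / 2) *\<^sub>R (- 1 / z1 + - 1 / z2)"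
    using exp_half_line_eq[OF z1] e2 by simp
  also have "\<dots> = complex_of_real (l\<^sup>2 / (l\<^sup>2 + t\<^sup>2))"
  proof -
    have d: "l\<^sup>2 + t\<^sup>2 \<noteq> 0" using l by (simp add: add_pos_nonneg)
    have "- 1 / z1 + - 1 / z2 = complex_of_real (2 * l / (l\<^sup>2 + t\<^sup>2))"
      unfolding z1_def z2_def using l by (simp add: complex_eq_iff Re_divide Im_divide cmod_power2 power2_eq_square add_divide_distrib[symmetric])
    then show ?thesis
      by (simp add: scaleR_conv_of_real power2_eq_square)
  qed
  finally show "integral\<^sup>L lborel (\<lambda>x. lapd l x *\<^sub>R iexp (t * x)) = complex_of_real (l\<^sup>2 / (l\<^sup>2 + t\<^sup>2))" .
qed

lemma erf_alt: "erf w = 1 - 2 / sqrt pi * (\<integral>u. indicator {w<..} u * exp (- u\<^sup>2) \<partial>lborel)"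
proof -
  have "(\<integral>u. indicator {w<..} u * exp (- u\<^sup>2) \<partial>lborel) = (LBINT u:{w<..}. exp (- (u::real)\<^sup>2))"
    unfolding set_lebesgue_integral_def by simp
  then show ?thesis using erf_tail[of w] pi_gt_zero by (simp add: field_simps)
qed

lemma erf_measurable[measurable]: "erf \<in> borel_measurable borel"
proof -
  let ?g = "\<lambda>p::real\<times>real. (if fst p < snd p then 1 else 0) * exp (- (snd p)\<^sup>2)"
  have m: "?g \<in> borel_measurable (borel \<Otimes>\<^sub>M lborel)"
  proof -
    have "sets (borel \<Otimes>\<^sub>M lborel) = sets (borel \<Otimes>\<^sub>M (borel::real measure))"
      by (intro sets_pair_measure_cong) auto
    moreover have "?g \<in> borel_measurable (borel \<Otimes>\<^sub>M borel)"
      by measurable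
    ultimately show ?thesis using measurable_cong_sets by blast
  qed
  have "(\<lambda>w. \<integral>u. ?g (w, u) \<partial>lborel) \<in> borel_measurable borel"
    by (rule lborel.borel_measurable_lebesgue_integral) (use m in simp)
  then have "(\<lambda>w. 1 - 2 / sqrt pi * (\<integral>u. ?g (w, u) \<partial>lborel)) \<in> borel_measurable borel"
    by simp
  moreover have "(\<lambda>w. 1 - 2 / sqrt pi * (\<integral>u. ?g (w, u) \<partial>lborel)) = erf"
  proof
    fix w
    have "(\<lambda>u. ?g (w, u)) = (\<lambda>u. indicator {w<..} u * exp (- u\<^sup>2))"
      by (auto simp: fun_eq_iff indicator_def)
    then show "1 - 2 / sqrt pi * (\<integral>u. ?g (w, u) \<partial>lborel) = erf w"
      by (simp add: erf_alt)
  qed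
  ultimately show ?thesis by metis
qed

lemma Qf_measurable[measurable]: "Qf l sw \<in> borel_measurable borel"
  unfolding Qf_def by measurable

lemma Qf_nonneg: "Qf l sw y \<ge> 0"
  unfolding Qf_def using erf_le_1[of "l * sw / 2 - y / sw"] erf_le_1[of "l * sw / 2 + y / sw"]
  by (intro mult_nonneg_nonneg add_nonneg_nonneg) auto

lemma lapd_nonneg: "l > 0 \<Longrightarrow> lapd l x \<ge> 0"
  unfolding lapd_def by simp

lemma lapd_prob: assumes l: "l > 0" shows "prob_space (density lborel (\<lambda>x. ennreal (lapd l x)))"
proof
  have i: "integrable lborel (\<lambda>x. lapd l x *\<^sub>R iexp (0 * x))" by (rule lapd_char_int[OF l])
  have e: "integral\<^sup>L lborel (\<lambda>x. lapd l x *\<^sub>R iexp (0 * x)) = complex_of_real (l\<^sup>2 / (l\<^sup>2 + 0\<^sup>2))"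
    by (rule lapd_char_eq[OF l])
  have ir: "integrable lborel (lapd l)"
    using integrable_Re[OF i] by (simp add: scaleR_conv_of_real)
  have "integral\<^sup>L lborel (lapd l) = 1"
    using arg_cong[OF e, of Re] l by (simp add: scaleR_conv_of_real)
  then have "(\<integral>\<^sup>+x. ennreal (lapd l x) \<partial>lborel) = 1"
    using nn_integral_eq_integral[OF ir] lapd_nonneg[OF l] by simp
  then show "emeasure (density lborel (\<lambda>x. ennreal (lapd l x))) (space (density lborel (\<lambda>x. ennreal (lapd l x)))) = 1"
    by (simp add: emeasure_density)
qed

lemma char_density_lapd: assumes l: "l > 0"
  shows "char (density lborel (\<lambda>x. ennreal (lapd l x))) t = complex_of_real (l\<^sup>2 / (l\<^sup>2 + t\<^sup>2))"
  unfolding char_def using lapd_char_eq[OF l, of t] l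
  by (subst integral_density) (auto simp: lapd_nonneg)

lemma char_density_normal: assumes s: "s > 0"
  shows "char (density lborel (\<lambda>x. ennreal (normal_density 0 s x))) t = complex_of_real (exp (- (s\<^sup>2 * t\<^sup>2) / 2))"
proof -
  let ?N = "density lborel (\<lambda>x. ennreal (normal_density 0 s x))"
  interpret N: prob_space ?N by (rule prob_space_normal_density[OF s])
  have d: "distributed ?N lborel (\<lambda>x. x) (\<lambda>x. ennreal (normal_density 0 s x))"
    unfolding distributed_def
  proof (intro conjI)
    show "distr ?N lborel (\<lambda>x. x) = ?N"
      by (rule measure_eqI) (auto simp: emeasure_distr)
  qed auto
  show ?thesis
    unfolding char_def using N.char_normal_rv[OF d s] by simp
qed

lemma char_convolution:
  assumes A: "prob_space A" "sets A = sets borel" and B: "prob_space B" "sets B = sets borel"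
  shows "char (A \<star> B) t = char A t * char B t"
proof -
  interpret A: prob_space A by (rule A(1))
  interpret B: prob_space B by (rule B(1))
  interpret P: pair_prob_space A B ..
  have [measurable_cong]: "sets A = sets borel" "sets B = sets borel" using A B by auto
  have int: "integrable (A \<Otimes>\<^sub>M B) (\<lambda>p. iexp (t * fst p) * iexp (t * snd p))"
    by (rule P.integrable_const_bound[where B=1]) (auto simp: norm_mult)
  have "char (A \<star> B) t = (CLINT p|A \<Otimes>\<^sub>M B. iexp (t * (fst p + snd p)))"
    unfolding char_def convolution_def
    by (subst integral_distr) (auto simp: case_prod_beta)
  also have "\<dots> = (CLINT p|A \<Otimes>\<^sub>M B. iexp (t * fst p) * iexp (t * snd p))"
    by (simp add: distrib_left exp_add[symmetric] algebra_simps)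
  also have "\<dots> = (CLINT x|A. (CLINT y|B. iexp (t * fst (x, y)) * iexp (t * snd (x, y))))"
    by (rule P.integral_fst'[OF int, symmetric])
  also have "\<dots> = (CLINT x|A. iexp (t * x) * (CLINT y|B. iexp (t * y)))"
    by simp
  also have "\<dots> = char A t * char B t"
    unfolding char_def by simp
  finally show ?thesis .
qed

lemma Q_fourier:
  assumes l: "l > 0" and sw: "sw > 0"
  shows Q_fourier_int: "integrable lborel (\<lambda>y. Qf l sw y *\<^sub>R iexp (t * y))"
    and Q_fourier_eq: "integral\<^sup>L lborel (\<lambda>y. Qf l sw y *\<^sub>R iexp (t * y))
            = complex_of_real (2 * l / (l\<^sup>2 + t\<^sup>2) * exp (- (sw\<^sup>2 * t\<^sup>2) / 4))"
proof -
  let ?nd = "normal_density 0 (sqrt (sw\<^sup>2 / 2))"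
  let ?L = "density lborel (\<lambda>x. ennreal (lapd l x))"
  let ?N = "density lborel (\<lambda>x. ennreal (?nd x))"
  let ?g = "\<lambda>y. l / 2 * Qf l sw y"
  have s: "sqrt (sw\<^sup>2 / 2) > 0" using sw by simp
  have s2: "(sqrt (sw\<^sup>2 / 2))\<^sup>2 = sw\<^sup>2 / 2" by simp
  interpret L: prob_space ?L by (rule lapd_prob[OF l])
  interpret N: prob_space ?N by (rule prob_space_normal_density[OF s])
  have conv: "?L \<star> ?N = density lborel (\<lambda>y. ennreal (?g y))"
  proof -
    have "?L \<star> ?N = density lborel (\<lambda>y. \<integral>\<^sup>+v. ennreal (lapd l (y - v)) * ennreal (?nd v) \<partial>lborel)"
      by (rule convolution_density) (auto intro: L.finite_measure_axioms N.finite_measure_axioms)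
    also have "\<dots> = density lborel (\<lambda>y. ennreal (?g y))"
      by (simp only: lap_conv[OF sw l])
    finally show ?thesis .
  qed
  interpret P: pair_prob_space ?L ?N ..
  interpret G: prob_space "?L \<star> ?N"
    unfolding convolution_def by (rule P.prob_space_distr) simp
  have gnn: "\<And>y. ?g y \<ge> 0" using l by (simp add: Qf_nonneg)
  have "integrable (?L \<star> ?N) (\<lambda>y. iexp (t * y))"
    by (rule G.integrable_iexp_real) simp
  then have ig: "integrable lborel (\<lambda>y. ?g y *\<^sub>R iexp (t * y))"
    unfolding conv by (subst (asm) integrable_density) (use l in \<open>auto simp: gnn Qf_nonneg\<close>)
  have "char (?L \<star> ?N) t = char ?L t * char ?N t"
    by (rule char_convolution) (auto intro: L.prob_space_axioms N.prob_space_axioms)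
  also have "\<dots> = complex_of_real (l\<^sup>2 / (l\<^sup>2 + t\<^sup>2)) * complex_of_real (exp (- ((sqrt (sw\<^sup>2 / 2))\<^sup>2 * t\<^sup>2) / 2))"
    by (simp only: char_density_lapd[OF l] char_density_normal[OF s])
  finally have ch: "char (?L \<star> ?N) t = complex_of_real (l\<^sup>2 / (l\<^sup>2 + t\<^sup>2) * exp (- (sw\<^sup>2 * t\<^sup>2) / 4))"
    unfolding s2 by simp
  have ge: "integral\<^sup>L lborel (\<lambda>y. ?g y *\<^sub>R iexp (t * y)) = complex_of_real (l\<^sup>2 / (l\<^sup>2 + t\<^sup>2) * exp (- (sw\<^sup>2 * t\<^sup>2) / 4))"
    using ch unfolding char_def conv by (subst (asm) integral_density) (use l in \<open>auto simp: gnn Qf_nonneg\<close>)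
  have eqf: "(\<lambda>y. Qf l sw y *\<^sub>R iexp (t * y)) = (\<lambda>y. (2 / l) *\<^sub>R (?g y *\<^sub>R iexp (t * y)))"
    using l by (auto simp: fun_eq_iff)
  show "integrable lborel (\<lambda>y. Qf l sw y *\<^sub>R iexp (t * y))"
    unfolding eqf by (rule integrable_scaleR_right[OF ig])
  show "integral\<^sup>L lborel (\<lambda>y. Qf l sw y *\<^sub>R iexp (t * y))
            = complex_of_real (2 * l / (l\<^sup>2 + t\<^sup>2) * exp (- (sw\<^sup>2 * t\<^sup>2) / 4))"
    unfolding eqf integral_scaleR_right ge using l by (simp add: power2_eq_square scaleR_conv_of_real)
qed

lemma ofdm_pdf_alt:
  "ofdm_pdf lam sw a b y = (\<Sum>j\<in>{a..b}. \<Sum>n\<in>{a..b}. (pfc lam {a..b} j * pfc lam {a..b} n / (lam j + lam n)) * Qf (lam j) sw y)"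
  unfolding ofdm_pdf_def sum_distrib_left
proof (intro sum.cong refl)
  fix j n
  let ?P = "\<Prod>i = a..b. lam i"
  let ?Dj = "\<Prod>k\<in>{a..b} - {j}. lam k - lam j"
  let ?Dn = "\<Prod>u\<in>{a..b} - {n}. lam u - lam n"
  let ?E = "exp ((lam j * sw / 2)\<^sup>2)"
  let ?B = "(exp (- lam j * y) * (1 - erf (lam j * sw / 2 - y / sw)) +
           exp (lam j * y) * (1 - erf (lam j * sw / 2 + y / sw)))"
  have "?P\<^sup>2 * (?E / (?Dj * ?Dn * (lam j + lam n)) * (1 / 2) * ?B) = (?P / ?Dj) * (?P / ?Dn) / (lam j + lam n) * (?E * (1/2) * ?B)"
    by (simp only: power2_eq_square times_divide_eq_left times_divide_eq_right divide_divide_eq_left mult_ac)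
  then show "?P\<^sup>2 * (?E / (?Dj * ?Dn * (lam j + lam n)) * (1 / 2) * ?B) =
         pfc lam {a..b} j * pfc lam {a..b} n / (lam j + lam n) * Qf (lam j) sw y"
    unfolding pfc_def Qf_def by simp
qed

lemma ofdm_pdf_fourier:
  fixes lam :: "nat \<Rightarrow> real"
  assumes ab: "a \<le> b" and inj: "inj_on lam {a..b}" and pos: "\<And>i. i \<in> {a..b} \<Longrightarrow> lam i > 0" and sw: "sw > 0"
  shows ofdm_pdf_fourier_int: "integrable lborel (\<lambda>y. ofdm_pdf lam sw a b y *\<^sub>R iexp (t * y))"
    and ofdm_pdf_fourier_eq: "integral\<^sup>L lborel (\<lambda>y. ofdm_pdf lam sw a b y *\<^sub>R iexp (t * y))
       = complex_of_real ((\<Prod>l\<in>{a..b}. (lam l)\<^sup>2 / ((lam l)\<^sup>2 + t\<^sup>2)) * exp (- (sw\<^sup>2 * t\<^sup>2) / 4))"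
proof -
  let ?S = "{a..b}"
  let ?c = "\<lambda>j n. pfc lam ?S j * pfc lam ?S n / (lam j + lam n)"
  have eq: "(\<lambda>y. ofdm_pdf lam sw a b y *\<^sub>R iexp (t * y)) = (\<lambda>y. \<Sum>j\<in>?S. \<Sum>n\<in>?S. ?c j n *\<^sub>R (Qf (lam j) sw y *\<^sub>R iexp (t * y)))"
    unfolding ofdm_pdf_alt by (simp add: scaleR_sum_left)
  have ij: "\<And>j. j \<in> ?S \<Longrightarrow> integrable lborel (\<lambda>y. Qf (lam j) sw y *\<^sub>R iexp (t * y))"
    using Q_fourier_int[OF pos sw] by blast
  show "integrable lborel (\<lambda>y. ofdm_pdf lam sw a b y *\<^sub>R iexp (t * y))"
    unfolding eq
  proof (rule Bochner_Integration.integrable_sum)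
    fix j assume j: "j \<in> ?S"
    show "integrable lborel (\<lambda>y. \<Sum>n\<in>?S. ?c j n *\<^sub>R (Qf (lam j) sw y *\<^sub>R iexp (t * y)))"
      by (rule Bochner_Integration.integrable_sum, rule integrable_scaleR_right, rule ij[OF j])
  qed
  have "integral\<^sup>L lborel (\<lambda>y. ofdm_pdf lam sw a b y *\<^sub>R iexp (t * y))
      = (\<Sum>j\<in>?S. \<Sum>n\<in>?S. ?c j n *\<^sub>R integral\<^sup>L lborel (\<lambda>y. Qf (lam j) sw y *\<^sub>R iexp (t * y)))"
    unfolding eq
  proof (subst Bochner_Integration.integral_sum)
    fix j assume j: "j \<in> ?S"
    show "integrable lborel (\<lambda>y. \<Sum>n\<in>?S. ?c j n *\<^sub>R (Qf (lam j) sw y *\<^sub>R iexp (t * y)))"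
      by (rule Bochner_Integration.integrable_sum, rule integrable_scaleR_right, rule ij[OF j])
  next
    show "(\<Sum>j\<in>?S. integral\<^sup>L lborel (\<lambda>y. \<Sum>n\<in>?S. ?c j n *\<^sub>R (Qf (lam j) sw y *\<^sub>R iexp (t * y))))
      = (\<Sum>j\<in>?S. \<Sum>n\<in>?S. ?c j n *\<^sub>R integral\<^sup>L lborel (\<lambda>y. Qf (lam j) sw y *\<^sub>R iexp (t * y)))"
    proof (intro sum.cong refl)
      fix j assume j: "j \<in> ?S"
      show "integral\<^sup>L lborel (\<lambda>y. \<Sum>n\<in>?S. ?c j n *\<^sub>R (Qf (lam j) sw y *\<^sub>R iexp (t * y)))
        = (\<Sum>n\<in>?S. ?c j n *\<^sub>R integral\<^sup>L lborel (\<lambda>y. Qf (lam j) sw y *\<^sub>R iexp (t * y)))"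
      proof (subst Bochner_Integration.integral_sum)
        show "\<And>n. n \<in> ?S \<Longrightarrow> integrable lborel (\<lambda>y. ?c j n *\<^sub>R (Qf (lam j) sw y *\<^sub>R iexp (t * y)))"
          by (rule integrable_scaleR_right, rule ij[OF j])
        show "(\<Sum>n\<in>?S. integral\<^sup>L lborel (\<lambda>y. ?c j n *\<^sub>R (Qf (lam j) sw y *\<^sub>R iexp (t * y))))
           = (\<Sum>n\<in>?S. ?c j n *\<^sub>R integral\<^sup>L lborel (\<lambda>y. Qf (lam j) sw y *\<^sub>R iexp (t * y)))"
          by (simp only: integral_scaleR_right)
      qed
    qed
  qed
  also have "\<dots> = (\<Sum>j\<in>?S. \<Sum>n\<in>?S. ?c j n *\<^sub>R complex_of_real (2 * lam j / ((lam j)\<^sup>2 + t\<^sup>2) * exp (- (sw\<^sup>2 * t\<^sup>2) / 4)))"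
    using Q_fourier_eq[OF pos sw] by (intro sum.cong refl) auto
  also have "\<dots> = complex_of_real ((\<Sum>j\<in>?S. \<Sum>n\<in>?S. ?c j n * (2 * lam j / ((lam j)\<^sup>2 + t\<^sup>2))) * exp (- (sw\<^sup>2 * t\<^sup>2) / 4))"
    by (simp only: scaleR_conv_of_real of_real_sum of_real_mult sum_distrib_left sum_distrib_right mult_ac)
  also have "(\<Sum>j\<in>?S. \<Sum>n\<in>?S. ?c j n * (2 * lam j / ((lam j)\<^sup>2 + t\<^sup>2))) = (\<Prod>l\<in>?S. (lam l)\<^sup>2 / ((lam l)\<^sup>2 + t\<^sup>2))"
    by (rule pf_final) (use ab inj pos in auto)
  finally show "integral\<^sup>L lborel (\<lambda>y. ofdm_pdf lam sw a b y *\<^sub>R iexp (t * y))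
       = complex_of_real ((\<Prod>l\<in>{a..b}. (lam l)\<^sup>2 / ((lam l)\<^sup>2 + t\<^sup>2)) * exp (- (sw\<^sup>2 * t\<^sup>2) / 4))" .
qed

lemma integrable_times_iexp:
  fixes g :: "real \<Rightarrow> real"
  assumes "integrable lborel g"
  shows "integrable lborel (\<lambda>y. g y *\<^sub>R iexp (t * y))"
proof (rule Bochner_Integration.integrable_bound[OF assms])
  show "(\<lambda>y. g y *\<^sub>R iexp (t * y)) \<in> borel_measurable lborel"
    using borel_measurable_integrable[OF assms] by measurable
  show "AE x in lborel. norm (g x *\<^sub>R iexp (t * x)) \<le> norm (g x)"
    by simp
qed

lemma char_density_real:
  fixes g :: "real \<Rightarrow> real"
  assumes "g \<in> borel_measurable borel" "\<And>x. g x \<ge> 0"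
  shows "char (density lborel (\<lambda>x. ennreal (g x))) t = integral\<^sup>L lborel (\<lambda>y. g y *\<^sub>R iexp (t * y))"
  unfolding char_def using assms by (subst integral_density) auto

lemma fourier_unique:
  fixes p f :: "real \<Rightarrow> real"
  assumes pm: "p \<in> borel_measurable borel" and fm: "f \<in> borel_measurable borel"
    and pi: "integrable lborel p" and fi: "integrable lborel f" and pn: "\<And>x. p x \<ge> 0"
    and p1: "integral\<^sup>L lborel p = 1"
    and ch: "\<And>t. integral\<^sup>L lborel (\<lambda>y. p y *\<^sub>R iexp (t * y)) = integral\<^sup>L lborel (\<lambda>y. f y *\<^sub>R iexp (t * y))"
  shows "AE y in lborel. p y = f y"
proof -
  define fp where "fp y = max (f y) 0" for y
  define fn where "fn y = max (- f y) 0" for y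
  have fpm[measurable]: "fp \<in> borel_measurable borel" unfolding fp_def using fm by measurable
  have fnm[measurable]: "fn \<in> borel_measurable borel" unfolding fn_def using fm by measurable
  have fpi: "integrable lborel fp" unfolding fp_def using fi by (intro integrable_max) auto
  have fni: "integrable lborel fn" unfolding fn_def using fi by (intro integrable_max) auto
  have fsplit: "\<And>y. f y = fp y - fn y" unfolding fp_def fn_def by auto
  have fpn: "\<And>y. fp y \<ge> 0" and fnn: "\<And>y. fn y \<ge> 0" unfolding fp_def fn_def by auto
  have If: "integral\<^sup>L lborel f = 1"
  proof -
    have "integral\<^sup>L lborel (\<lambda>y. p y *\<^sub>R iexp (0 * y)) = integral\<^sup>L lborel (\<lambda>y. f y *\<^sub>R iexp (0 * y))"
      by (rule ch)
    then have "complex_of_real (integral\<^sup>L lborel p) = complex_of_real (integral\<^sup>L lborel f)"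
      by (simp add: scaleR_conv_of_real)
    then show ?thesis using p1 by simp
  qed
  define c where "c = 1 + integral\<^sup>L lborel fn"
  have cpos: "c > 0" unfolding c_def using integral_nonneg_AE[of fn lborel] fnn by (simp add: add_pos_nonneg)
  have Ifp: "integral\<^sup>L lborel fp = c"
  proof -
    have "integral\<^sup>L lborel f = integral\<^sup>L lborel fp - integral\<^sup>L lborel fn"
      unfolding fsplit[abs_def] using fpi fni by simp
    then show ?thesis using If unfolding c_def by simp
  qed
  define g1 where "g1 y = (p y + fn y) / c" for y
  define g2 where "g2 y = fp y / c" for y
  have g1m[measurable]: "g1 \<in> borel_measurable borel" unfolding g1_def using pm by measurable
  have g2m[measurable]: "g2 \<in> borel_measurable borel" unfolding g2_def by measurable
  have g1n: "\<And>y. g1 y \<ge> 0" unfolding g1_def using pn fnn cpos by simp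
  have g2n: "\<And>y. g2 y \<ge> 0" unfolding g2_def using fpn cpos by simp
  have g1i: "integrable lborel g1" unfolding g1_def using pi fni by simp
  have g2i: "integrable lborel g2" unfolding g2_def using fpi by simp
  have Ig1: "integral\<^sup>L lborel g1 = 1"
    unfolding g1_def using pi fni cpos p1 by (simp add: c_def)
  have Ig2: "integral\<^sup>L lborel g2 = 1"
    unfolding g2_def using fpi cpos Ifp by simp
  have rd: "real_distribution (density lborel (\<lambda>x. ennreal (g x)))"
    if gm: "g \<in> borel_measurable borel" and gn: "\<And>y. g y \<ge> 0" and gi: "integrable lborel g" and Ig: "integral\<^sup>L lborel g = 1" for g
  proof -
    have "prob_space (density lborel (\<lambda>x. ennreal (g x)))"
    proof
      have "(\<integral>\<^sup>+x. ennreal (g x) \<partial>lborel) = 1"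
        using nn_integral_eq_integral[OF gi] gn Ig by simp
      then show "emeasure (density lborel (\<lambda>x. ennreal (g x))) (space (density lborel (\<lambda>x. ennreal (g x)))) = 1"
        using gm by (simp add: emeasure_density)
    qed
    then show ?thesis unfolding real_distribution_def real_distribution_axioms_def by simp
  qed
  have eq: "density lborel (\<lambda>x. ennreal (g1 x)) = density lborel (\<lambda>x. ennreal (g2 x))"
  proof (rule Levy_uniqueness)
    show "real_distribution (density lborel (\<lambda>x. ennreal (g1 x)))" by (rule rd[OF g1m g1n g1i Ig1])
    show "real_distribution (density lborel (\<lambda>x. ennreal (g2 x)))" by (rule rd[OF g2m g2n g2i Ig2])
    show "char (density lborel (\<lambda>x. ennreal (g1 x))) = char (density lborel (\<lambda>x. ennreal (g2 x)))"
    proof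
      fix t
      have ip: "integrable lborel (\<lambda>y. p y *\<^sub>R iexp (t * y))" by (rule integrable_times_iexp[OF pi])
      have ifn: "integrable lborel (\<lambda>y. fn y *\<^sub>R iexp (t * y))" by (rule integrable_times_iexp[OF fni])
      have ifp: "integrable lborel (\<lambda>y. fp y *\<^sub>R iexp (t * y))" by (rule integrable_times_iexp[OF fpi])
      have e1: "(\<lambda>y. g1 y *\<^sub>R iexp (t * y)) = (\<lambda>y. (1 / c) *\<^sub>R (p y *\<^sub>R iexp (t * y) + fn y *\<^sub>R iexp (t * y)))"
        unfolding g1_def by (auto simp: fun_eq_iff scaleR_add_left[symmetric] divide_inverse mult.commute)
      have e2: "(\<lambda>y. g2 y *\<^sub>R iexp (t * y)) = (\<lambda>y. (1 / c) *\<^sub>R (fp y *\<^sub>R iexp (t * y)))"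
        unfolding g2_def by (auto simp: fun_eq_iff divide_inverse mult.commute)
      have ef: "integral\<^sup>L lborel (\<lambda>y. f y *\<^sub>R iexp (t * y)) = integral\<^sup>L lborel (\<lambda>y. fp y *\<^sub>R iexp (t * y)) - integral\<^sup>L lborel (\<lambda>y. fn y *\<^sub>R iexp (t * y))"
      proof -
        have "(\<lambda>y. f y *\<^sub>R iexp (t * y)) = (\<lambda>y. fp y *\<^sub>R iexp (t * y) - fn y *\<^sub>R iexp (t * y))"
          by (auto simp: fun_eq_iff fsplit scaleR_diff_left)
        then show ?thesis using ifp ifn by simp
      qed
      have "char (density lborel (\<lambda>x. ennreal (g1 x))) t = (1 / c) *\<^sub>R (integral\<^sup>L lborel (\<lambda>y. p y *\<^sub>R iexp (t * y)) + integral\<^sup>L lborel (\<lambda>y. fn y *\<^sub>R iexp (t * y)))"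
        unfolding char_density_real[OF g1m g1n] e1 using ip ifn by simp
      also have "\<dots> = (1 / c) *\<^sub>R integral\<^sup>L lborel (\<lambda>y. fp y *\<^sub>R iexp (t * y))"
        unfolding ch ef by simp
      also have "\<dots> = char (density lborel (\<lambda>x. ennreal (g2 x))) t"
        by (simp only: char_density_real[OF g2m g2n] e2 integral_scaleR_right)
      finally show "char (density lborel (\<lambda>x. ennreal (g1 x))) t = char (density lborel (\<lambda>x. ennreal (g2 x))) t" .
    qed
  qed
  have "AE y in lborel. ennreal (g1 y) = ennreal (g2 y)"
    by (rule sigma_finite_measure.density_unique[OF sigma_finite_lborel _ _ eq]) auto
  then show ?thesis
  proof eventually_elim
    fix y assume "ennreal (g1 y) = ennreal (g2 y)"
    then have "g1 y = g2 y" using g1n[of y] g2n[of y] by simp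
    then have "p y + fn y = fp y" unfolding g1_def g2_def using cpos by (simp add: divide_cancel_right)
    then show "p y = f y"
      using pn[of y] unfolding fp_def fn_def by (cases "f y \<ge> 0") auto
  qed
qed

lemma normal_density_le: "normal_density 0 s x \<le> 1 / sqrt (2 * pi * s\<^sup>2)"
proof -
  have e: "exp (- (x - 0)\<^sup>2 / (2 * s\<^sup>2)) \<le> 1" by simp
  have c: "1 / sqrt (2 * pi * s\<^sup>2) \<ge> 0" by simp
  from mult_left_mono[OF e c] show ?thesis unfolding normal_density_def by simp
qed

lemma (in prob_space) sum_noise_density:
  assumes X[measurable]: "X \<in> borel_measurable M"
    and W: "distributed M lborel W (\<lambda>x. ennreal (normal_density 0 s x))" and s: "s > 0"
    and ind: "indep_var borel X borel W"
  shows "\<exists>p. p \<in> borel_measurable borel \<and> (\<forall>x. 0 \<le> p x) \<and>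
           distr M lborel (\<lambda>\<omega>. X \<omega> + W \<omega>) = density lborel (\<lambda>x. ennreal (p x))"
proof -
  let ?g = "normal_density 0 s"
  let ?PX = "distr M lborel X"
  let ?N = "density lborel (\<lambda>x. ennreal (?g x))"
  have Wm[measurable]: "W \<in> borel_measurable M" using distributed_measurable[OF W] by simp
  interpret PX: prob_space ?PX by (rule prob_space_distr) simp
  interpret NN: prob_space ?N by (rule prob_space_normal_density[OF s])
  interpret PL: pair_sigma_finite ?PX lborel
    by (intro pair_sigma_finite.intro PX.sigma_finite_measure_axioms sigma_finite_lborel)
  have sPX[measurable_cong]: "sets ?PX = sets borel" by simp
  define q where "q z = (\<integral>\<^sup>+x. ennreal (?g (z - x)) \<partial>?PX)" for z
  have pairm: "(\<lambda>(x, z). ennreal (?g (z - x)) * indicator A z) \<in> borel_measurable (?PX \<Otimes>\<^sub>M lborel)"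
    if A: "A \<in> sets borel" for A
  proof -
    have "sets (?PX \<Otimes>\<^sub>M lborel) = sets (borel \<Otimes>\<^sub>M (borel::real measure))"
      by (intro sets_pair_measure_cong) auto
    moreover have "(\<lambda>(x, z). ennreal (?g (z - x)) * indicator A z) \<in> borel_measurable (borel \<Otimes>\<^sub>M (borel::real measure))"
      using A by measurable
    ultimately show ?thesis using measurable_cong_sets by blast
  qed
  have qm[measurable]: "q \<in> borel_measurable borel"
  proof -
    have "sets (lborel \<Otimes>\<^sub>M ?PX) = sets ((borel::real measure) \<Otimes>\<^sub>M borel)"
      by (intro sets_pair_measure_cong) auto
    moreover have "(\<lambda>(z, x). ennreal (?g (z - x))) \<in> borel_measurable ((borel::real measure) \<Otimes>\<^sub>M borel)"
      by measurable
    ultimately have "(\<lambda>(z, x). ennreal (?g (z - x))) \<in> borel_measurable (lborel \<Otimes>\<^sub>M ?PX)"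
      using measurable_cong_sets by blast
    then have "(\<lambda>z. \<integral>\<^sup>+x. ennreal (?g (z - x)) \<partial>?PX) \<in> borel_measurable lborel"
      by (rule PX.borel_measurable_nn_integral)
    then show ?thesis unfolding q_def by simp
  qed
  define B where "B = 1 / sqrt (2 * pi * s\<^sup>2)"
  have qb: "q z \<le> ennreal B" for z
  proof -
    have "q z \<le> (\<integral>\<^sup>+x. ennreal B \<partial>?PX)"
      unfolding q_def B_def by (intro nn_integral_mono) (simp add: normal_density_le)
    also have "\<dots> = ennreal B" using PX.emeasure_space_1 by simp
    finally show ?thesis .
  qed
  define p where "p z = enn2real (q z)" for z
  have pq: "ennreal (p z) = q z" for z
    unfolding p_def using qb[of z] by (intro ennreal_enn2real) (auto simp: top_unique dest: order.strict_trans1[OF _ ennreal_less_top])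
  have pm: "p \<in> borel_measurable borel" unfolding p_def by measurable
  have "distr M lborel (\<lambda>\<omega>. X \<omega> + W \<omega>) = (?PX \<star> distr M lborel W)"
    by (rule sum_indep_random_variable_lborel[OF ind]) auto
  also have "distr M lborel W = ?N" by (rule distributed_distr_eq_density[OF W])
  also have "(?PX \<star> ?N) = density lborel q"
  proof (rule measure_eqI)
    show "sets (?PX \<star> ?N) = sets (density lborel q)" by simp
    fix A assume "A \<in> sets (?PX \<star> ?N)"
    then have A[measurable]: "A \<in> sets borel" by simp
    have "emeasure (?PX \<star> ?N) A = \<integral>\<^sup>+x. \<integral>\<^sup>+y. indicator A (x + y) \<partial>?N \<partial>?PX"
      by (rule convolution_emeasure') (auto intro: PX.finite_measure_axioms NN.finite_measure_axioms)
    also have "\<dots> = \<integral>\<^sup>+x. \<integral>\<^sup>+z. ennreal (?g (z - x)) * indicator A z \<partial>lborel \<partial>?PX"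
    proof (intro nn_integral_cong)
      fix x
      have "(\<integral>\<^sup>+y. indicator A (x + y) \<partial>?N) = (\<integral>\<^sup>+y. ennreal (?g y) * indicator A (x + y) \<partial>lborel)"
        by (subst nn_integral_density) auto
      also have "\<dots> = ennreal \<bar>1\<bar> * (\<integral>\<^sup>+z. ennreal (?g (- x + 1 * z)) * indicator A (x + (- x + 1 * z)) \<partial>lborel)"
        by (rule nn_integral_real_affine) auto
      also have "\<dots> = (\<integral>\<^sup>+z. ennreal (?g (z - x)) * indicator A z \<partial>lborel)"
        by simp
      finally show "(\<integral>\<^sup>+y. indicator A (x + y) \<partial>?N) = (\<integral>\<^sup>+z. ennreal (?g (z - x)) * indicator A z \<partial>lborel)" .
    qed
    also have "\<dots> = \<integral>\<^sup>+z. \<integral>\<^sup>+x. ennreal (?g (z - x)) * indicator A z \<partial>?PX \<partial>lborel"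
      by (rule PL.Fubini'[symmetric]) (rule pairm[OF A])
    also have "\<dots> = \<integral>\<^sup>+z. q z * indicator A z \<partial>lborel"
      unfolding q_def by (intro nn_integral_cong) (simp add: nn_integral_multc)
    also have "\<dots> = emeasure (density lborel q) A"
      by (simp add: emeasure_density)
    finally show "emeasure (?PX \<star> ?N) A = emeasure (density lborel q) A" .
  qed
  also have "density lborel q = density lborel (\<lambda>x. ennreal (p x))"
    by (simp add: pq)
  finally show ?thesis using pm by (intro exI[of _ p]) (auto simp: p_def)
qed

lemma (in prob_space) identify_distribution:
  fixes X W :: "'a \<Rightarrow> real" and f :: "real \<Rightarrow> real"
  assumes X[measurable]: "X \<in> borel_measurable M"
    and W: "distributed M lborel W (\<lambda>x. ennreal (normal_density 0 s x))" and s: "s > 0"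
    and ind: "indep_var borel X borel W"
    and fm[measurable]: "f \<in> borel_measurable borel" and fi: "integrable lborel f"
    and ch: "\<And>t. (CLINT \<omega>|M. iexp (t * (X \<omega> + W \<omega>))) = integral\<^sup>L lborel (\<lambda>y. f y *\<^sub>R iexp (t * y))"
  shows "distributed M lborel (\<lambda>\<omega>. X \<omega> + W \<omega>) (\<lambda>y. ennreal (f y))"
proof -
  have Wm[measurable]: "W \<in> borel_measurable M" using distributed_measurable[OF W] by simp
  obtain p where pm[measurable]: "p \<in> borel_measurable borel" and pn: "\<And>x. 0 \<le> p x"
    and dp: "distr M lborel (\<lambda>\<omega>. X \<omega> + W \<omega>) = density lborel (\<lambda>x. ennreal (p x))"
    using sum_noise_density[OF X W s ind] by blast
  interpret D: prob_space "density lborel (\<lambda>x. ennreal (p x))"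
    unfolding dp[symmetric] by (rule prob_space_distr) simp
  have np: "(\<integral>\<^sup>+x. ennreal (p x) \<partial>lborel) = ennreal 1"
    using D.emeasure_space_1 by (simp add: emeasure_density)
  have pi: "integrable lborel p"
    by (rule integrableI_nn_integral_finite[OF _ _ np]) (auto simp: pn)
  have p1: "integral\<^sup>L lborel p = 1"
    using np nn_integral_eq_integral[OF pi] pn by simp
  have chp: "integral\<^sup>L lborel (\<lambda>y. p y *\<^sub>R iexp (t * y)) = integral\<^sup>L lborel (\<lambda>y. f y *\<^sub>R iexp (t * y))" for t
  proof -
    have "integral\<^sup>L lborel (\<lambda>y. p y *\<^sub>R iexp (t * y)) = (CLINT y|density lborel (\<lambda>x. ennreal (p x)). iexp (t * y))"
      by (subst integral_density) (auto simp: pn)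
    also have "\<dots> = (CLINT y|distr M lborel (\<lambda>\<omega>. X \<omega> + W \<omega>). iexp (t * y))"
      unfolding dp ..
    also have "\<dots> = (CLINT \<omega>|M. iexp (t * (X \<omega> + W \<omega>)))"
      by (subst integral_distr) auto
    finally show ?thesis using ch by simp
  qed
  have ae: "AE y in lborel. p y = f y"
    by (rule fourier_unique[OF pm fm pi fi pn p1 chp])
  have "density lborel (\<lambda>x. ennreal (p x)) = density lborel (\<lambda>x. ennreal (f x))"
    by (rule density_cong) (use ae in \<open>auto elim: eventually_mono\<close>)
  then show ?thesis
    unfolding distributed_def using dp by auto
qed

lemma part_ii_generic:
  fixes M :: "'a measure"
    and nx nh nz ns :: nat
    and \<sigma>x \<sigma>w :: real and \<sigma>h :: "nat \<Rightarrow> real"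
    and x :: "int \<Rightarrow> nat \<Rightarrow> 'a \<Rightarrow> complex"
    and h :: "int \<Rightarrow> nat \<Rightarrow> 'a \<Rightarrow> complex"
    and w :: "int \<Rightarrow> nat \<Rightarrow> 'a \<Rightarrow> complex"
    and n :: int and m :: nat and u :: complex and \<phi> :: "complex \<Rightarrow> real"
  assumes P: "prob_space M"
    and nx: "nx \<ge> 1" and nh: "nh \<ge> 1"
    and \<sigma>x: "\<sigma>x > 0" and \<sigma>w: "\<sigma>w > 0" and \<sigma>h: "\<And>l. l < nh \<Longrightarrow> \<sigma>h l > 0"
    and data: "\<And>k. k < nx \<Longrightarrow> CN_rv M (\<sigma>x\<^sup>2) (x n k)"
    and chan: "\<And>l. l < nh \<Longrightarrow> CN_rv M ((\<sigma>h l)\<^sup>2) (h (n * int ns + int m) l)"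
    and indep: "prob_space.indep_vars M (\<lambda>_. borel)
          (\<lambda>i. case i of Inl k \<Rightarrow> x n k
                       | Inr (Inl l) \<Rightarrow> h (n * int ns + int m) l
                       | Inr (Inr _) \<Rightarrow> w n m)
          (Inl ` {..<nx} \<union> Inr ` Inl ` {..<nh} \<union> {Inr (Inr ())})"
    and mb: "m \<le> nx + nh - 2"
    and inj: "inj_on (\<lambda>k. 2 / (\<sigma>h k * \<sigma>x)) {fst (ofdm_ab nx nh m)..snd (ofdm_ab nx nh m)}"
    and u: "cmod u = 1" and \<phi>m[measurable]: "\<phi> \<in> borel_measurable borel"
    and Vd: "distributed M lborel (\<lambda>\<omega>. \<phi> (w n m \<omega>)) (\<lambda>t. ennreal (normal_density 0 (sqrt (\<sigma>w\<^sup>2 / 2)) t))"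
  shows "distributed M lborel
           (\<lambda>\<omega>. (\<Sum>l\<in>{fst (ofdm_ab nx nh m)..snd (ofdm_ab nx nh m)}. Re (h (n * int ns + int m) l \<omega> * (u * x n (m - l) \<omega>))) + \<phi> (w n m \<omega>))
           (\<lambda>y. ennreal (ofdm_pdf (\<lambda>k. 2 / (\<sigma>h k * \<sigma>x)) \<sigma>w (fst (ofdm_ab nx nh m)) (snd (ofdm_ab nx nh m)) y))"
proof -
  interpret prob_space M by (rule P)
  define a where "a = fst (ofdm_ab nx nh m)"
  define b where "b = snd (ofdm_ab nx nh m)"
  define L where "L = {a..b}"
  define lam where "lam k = 2 / (\<sigma>h k * \<sigma>x)" for k
  define hh where "hh l = h (n * int ns + int m) l" for l
  define xx where "xx k = x n k" for k
  define V0 where "V0 = (\<lambda>i. case i of Inl k \<Rightarrow> x n k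
                       | Inr (Inl l) \<Rightarrow> h (n * int ns + int m) l
                       | Inr (Inr (_::unit)) \<Rightarrow> w n m)"
  define I0 where "I0 = Inl ` {..<nx} \<union> Inr ` Inl ` {..<nh} \<union> {Inr (Inr ())}"
  have ind0: "indep_vars (\<lambda>_. borel) V0 I0" using indep unfolding V0_def I0_def .
  have ab: "a = (m + 1) - nx" "b = min m (nh - 1)" unfolding a_def b_def ofdm_ab_def by auto
  have aleb: "a \<le> b" using ab nx nh mb by auto
  have Lprops: "\<And>l. l \<in> L \<Longrightarrow> l < nh \<and> m - l < nx \<and> l \<le> m"
    unfolding L_def using ab nx nh by auto
  have finL: "finite L" unfolding L_def by simp
  have Lne: "L \<noteq> {}" unfolding L_def using aleb by simp
  have V0m: "\<And>i. i \<in> I0 \<Longrightarrow> V0 i \<in> borel_measurable M"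
    using ind0 unfolding indep_vars_def by auto
  have hhm: "\<And>l. l \<in> L \<Longrightarrow> hh l \<in> borel_measurable M"
  proof -
    fix l assume "l \<in> L"
    then have "Inr (Inl l) \<in> I0" using Lprops unfolding I0_def by auto
    from V0m[OF this] show "hh l \<in> borel_measurable M" unfolding V0_def hh_def by simp
  qed
  have xxm: "\<And>l. l \<in> L \<Longrightarrow> xx (m - l) \<in> borel_measurable M"
  proof -
    fix l assume "l \<in> L"
    then have "Inl (m - l) \<in> I0" using Lprops unfolding I0_def by auto
    from V0m[OF this] show "xx (m - l) \<in> borel_measurable M" unfolding V0_def xx_def by simp
  qed
  have wm[measurable]: "w n m \<in> borel_measurable M"
  proof -
    have "Inr (Inr ()) \<in> I0" unfolding I0_def by auto
    from V0m[OF this] show ?thesis unfolding V0_def by simp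
  qed
  define T where "T l \<omega> = Re (hh l \<omega> * (u * xx (m - l) \<omega>))" for l \<omega>
  define Vw where "Vw \<omega> = \<phi> (w n m \<omega>)" for \<omega>
  have Tm: "\<And>l. l \<in> L \<Longrightarrow> T l \<in> borel_measurable M"
  proof -
    fix l assume l: "l \<in> L"
    note [measurable] = hhm[OF l] xxm[OF l]
    show "T l \<in> borel_measurable M" unfolding T_def by measurable
  qed
  have Vwm[measurable]: "Vw \<in> borel_measurable M" unfolding Vw_def by measurable
  define K where "K j = (case j of Some l \<Rightarrow> {Inl (m - l), Inr (Inl l)} | None \<Rightarrow> {Inr (Inr ())})" for j :: "nat option"
  define J where "J = insert None (Some ` L)"
  have KI: "\<And>j. j \<in> J \<Longrightarrow> K j \<subseteq> I0"
    unfolding J_def K_def I0_def using Lprops by auto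
  have disj: "disjoint_family_on K J"
    unfolding disjoint_family_on_def J_def K_def by (auto split: option.splits dest!: Lprops)
  have indR: "indep_vars (\<lambda>j. PiM (K j) (\<lambda>_. borel)) (\<lambda>j \<omega>. restrict (\<lambda>i. V0 i \<omega>) (K j)) J"
    by (rule indep_vars_restrict[OF ind0 KI disj])
  have finJ: "finite J" unfolding J_def using finL by simp
  have None_notin: "None \<notin> Some ` L" by auto
  have charT: "(CLINT \<omega>|M. iexp (t * ((\<Sum>l\<in>L. T l \<omega>) + Vw \<omega>)))
       = (\<Prod>l\<in>L. (CLINT \<omega>|M. iexp (t * T l \<omega>))) * (CLINT \<omega>|M. iexp (t * Vw \<omega>))" for t
  proof -
    define G where "G j g = (case j of Some l \<Rightarrow> iexp (t * Re (g (Inr (Inl l)) * (u * g (Inl (m - l)))))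
                                     | None \<Rightarrow> iexp (t * \<phi> (g (Inr (Inr ())))))" for j and g :: "nat + nat + unit \<Rightarrow> complex"
    have Gm: "G j \<in> borel_measurable (PiM (K j) (\<lambda>_. borel))" if "j \<in> J" for j
    proof (cases j)
      case None
      have [simp]: "Inr (Inr ()) \<in> K None" unfolding K_def by simp
      show ?thesis unfolding G_def None option.case by measurable
    next
      case (Some l)
      have [simp]: "Inr (Inl l) \<in> K (Some l)" "Inl (m - l) \<in> K (Some l)" unfolding K_def by auto
      show ?thesis unfolding G_def Some option.case by measurable
    qed
    have indG: "indep_vars (\<lambda>_. borel) (\<lambda>j \<omega>. G j (restrict (\<lambda>i. V0 i \<omega>) (K j))) J"
      by (rule indep_vars_compose2[OF indR Gm])
    define Z where "Z j \<omega> = (case j of Some l \<Rightarrow> iexp (t * T l \<omega>) | None \<Rightarrow> iexp (t * Vw \<omega>))" for j \<omega>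
    have indZ: "indep_vars (\<lambda>_. borel) Z J"
    proof (rule indep_vars_cong[THEN iffD1, OF refl _ refl indG])
      fix j assume j: "j \<in> J"
      show "(\<lambda>\<omega>. G j (restrict (\<lambda>i. V0 i \<omega>) (K j))) = Z j"
      proof (cases j)
        case None
        then show ?thesis unfolding G_def Z_def K_def V0_def Vw_def by (auto simp: fun_eq_iff)
      next
        case (Some l)
        then show ?thesis unfolding G_def Z_def K_def V0_def T_def hh_def xx_def by (auto simp: fun_eq_iff)
      qed
    qed
    have Zi: "\<And>j. j \<in> J \<Longrightarrow> integrable M (Z j)"
    proof -
      fix j assume j: "j \<in> J"
      show "integrable M (Z j)"
      proof (cases j)
        case None
        show ?thesis unfolding Z_def None option.case by (rule integrable_iexp_real) simp
      next
        case (Some l)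
        with j have "l \<in> L" unfolding J_def by auto
        note [measurable] = Tm[OF this]
        show ?thesis unfolding Z_def Some option.case by (rule integrable_iexp_real) simp
      qed
    qed
    have prodZ: "(\<Prod>j\<in>J. Z j \<omega>) = iexp (t * ((\<Sum>l\<in>L. T l \<omega>) + Vw \<omega>))" for \<omega>
    proof -
      have "(\<Prod>j\<in>J. Z j \<omega>) = Z None \<omega> * (\<Prod>l\<in>L. Z (Some l) \<omega>)"
        unfolding J_def using finL None_notin by (simp add: prod.reindex)
      also have "\<dots> = iexp (t * Vw \<omega>) * (\<Prod>l\<in>L. iexp (t * T l \<omega>))"
        unfolding Z_def by simp
      also have "\<dots> = iexp (t * ((\<Sum>l\<in>L. T l \<omega>) + Vw \<omega>))"
        using finL by (simp add: exp_sum[symmetric] exp_add[symmetric] distrib_left sum_distrib_left algebra_simps)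
      finally show ?thesis .
    qed
    have "(CLINT \<omega>|M. iexp (t * ((\<Sum>l\<in>L. T l \<omega>) + Vw \<omega>))) = (CLINT \<omega>|M. (\<Prod>j\<in>J. Z j \<omega>))"
      by (simp only: prodZ)
    also have "\<dots> = (\<Prod>j\<in>J. (CLINT \<omega>|M. Z j \<omega>))"
      by (rule indep_vars_lebesgue_integral[OF finJ indZ Zi])
    also have "\<dots> = (CLINT \<omega>|M. Z None \<omega>) * (\<Prod>l\<in>L. (CLINT \<omega>|M. Z (Some l) \<omega>))"
      unfolding J_def using finL None_notin by (simp add: prod.reindex)
    also have "\<dots> = (\<Prod>l\<in>L. (CLINT \<omega>|M. iexp (t * T l \<omega>))) * (CLINT \<omega>|M. iexp (t * Vw \<omega>))"
      unfolding Z_def by (simp add: mult.commute)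
    finally show ?thesis .
  qed
  have lampos: "\<And>l. l \<in> L \<Longrightarrow> lam l > 0"
    unfolding lam_def using Lprops \<sigma>h \<sigma>x by simp
  have charTl: "(CLINT \<omega>|M. iexp (t * T l \<omega>)) = complex_of_real ((lam l)\<^sup>2 / ((lam l)\<^sup>2 + t\<^sup>2))"
    if l: "l \<in> L" for l t
  proof -
    have lnh: "l < nh" and lx: "m - l < nx" using Lprops[OF l] by auto
    have sub: "{Inr (Inl l)} \<subseteq> I0" "{Inl (m - l)} \<subseteq> I0" unfolding I0_def using lnh lx by auto
    have "indep_var (PiM {Inr (Inl l)} (\<lambda>_. borel)) (\<lambda>\<omega>. restrict (\<lambda>i. V0 i \<omega>) {Inr (Inl l)})
                    (PiM {Inl (m - l)} (\<lambda>_. borel)) (\<lambda>\<omega>. restrict (\<lambda>i. V0 i \<omega>) {Inl (m - l)})"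
      by (rule indep_var_restrict[OF ind0 _ sub]) auto
    then have "indep_var borel ((\<lambda>g. g (Inr (Inl l))) \<circ> (\<lambda>\<omega>. restrict (\<lambda>i. V0 i \<omega>) {Inr (Inl l)}))
                         borel ((\<lambda>g. g (Inl (m - l))) \<circ> (\<lambda>\<omega>. restrict (\<lambda>i. V0 i \<omega>) {Inl (m - l)}))"
      by (rule indep_var_compose) (auto intro: measurable_component_singleton)
    also have "((\<lambda>g. g (Inr (Inl l))) \<circ> (\<lambda>\<omega>. restrict (\<lambda>i. V0 i \<omega>) {Inr (Inl l)})) = hh l"
      unfolding V0_def hh_def by (auto simp: fun_eq_iff)
    also have "((\<lambda>g. g (Inl (m - l))) \<circ> (\<lambda>\<omega>. restrict (\<lambda>i. V0 i \<omega>) {Inl (m - l)})) = xx (m - l)"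
      unfolding V0_def xx_def by (auto simp: fun_eq_iff)
    finally have ihx: "indep_var borel (hh l) borel (xx (m - l))" .
    have "(CLINT \<omega>|M. iexp (t * T l \<omega>)) = complex_of_real (1 / (1 + t\<^sup>2 * (\<sigma>h l)\<^sup>2 * \<sigma>x\<^sup>2 / 4))"
      unfolding T_def
      by (rule CN_prod_char[OF chan[OF lnh, folded hh_def] data[OF lx, folded xx_def] _ _ ihx u])
         (use \<sigma>h[OF lnh] \<sigma>x in auto)
    also have "1 / (1 + t\<^sup>2 * (\<sigma>h l)\<^sup>2 * \<sigma>x\<^sup>2 / 4) = (lam l)\<^sup>2 / ((lam l)\<^sup>2 + t\<^sup>2)"
      unfolding lam_def using \<sigma>h[OF lnh] \<sigma>x by (simp add: field_simps power2_eq_square)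
    finally show ?thesis .
  qed
  have sw2: "sqrt (\<sigma>w\<^sup>2 / 2) > 0" using \<sigma>w by simp
  have charV: "(CLINT \<omega>|M. iexp (t * Vw \<omega>)) = complex_of_real (exp (- (\<sigma>w\<^sup>2 * t\<^sup>2) / 4))" for t
  proof -
    have "(CLINT \<omega>|M. iexp (t * Vw \<omega>)) = complex_of_real (exp (- ((sqrt (\<sigma>w\<^sup>2 / 2))\<^sup>2 * t\<^sup>2) / 2))"
      unfolding Vw_def by (rule char_normal_rv[OF Vd sw2])
    then show ?thesis by simp
  qed
  have injL: "inj_on lam L" using inj unfolding lam_def L_def a_def b_def .
  have charAll: "(CLINT \<omega>|M. iexp (t * ((\<Sum>l\<in>L. T l \<omega>) + Vw \<omega>)))
      = integral\<^sup>L lborel (\<lambda>y. ofdm_pdf lam \<sigma>w a b y *\<^sub>R iexp (t * y))" for t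
  proof -
    have "(CLINT \<omega>|M. iexp (t * ((\<Sum>l\<in>L. T l \<omega>) + Vw \<omega>)))
        = complex_of_real ((\<Prod>l\<in>L. (lam l)\<^sup>2 / ((lam l)\<^sup>2 + t\<^sup>2)) * exp (- (\<sigma>w\<^sup>2 * t\<^sup>2) / 4))"
      unfolding charT charV using charTl by simp
    also have "\<dots> = integral\<^sup>L lborel (\<lambda>y. ofdm_pdf lam \<sigma>w a b y *\<^sub>R iexp (t * y))"
      unfolding L_def by (rule ofdm_pdf_fourier_eq[symmetric, OF aleb _ _ \<sigma>w]) (use injL lampos in \<open>auto simp: L_def\<close>)
    finally show ?thesis .
  qed
  define A where "A = (Inl ` ((\<lambda>l. m - l) ` L) \<union> Inr ` Inl ` L :: (nat + nat + unit) set)"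
  define B where "B = {Inr (Inr ()) :: nat + nat + unit}"
  have AI: "A \<subseteq> I0" unfolding A_def I0_def using Lprops by auto
  have BI: "B \<subseteq> I0" unfolding B_def I0_def by auto
  have AB: "A \<inter> B = {}" unfolding A_def B_def by auto
  have iR: "indep_var (PiM A (\<lambda>_. borel)) (\<lambda>\<omega>. restrict (\<lambda>i. V0 i \<omega>) A)
                     (PiM B (\<lambda>_. borel)) (\<lambda>\<omega>. restrict (\<lambda>i. V0 i \<omega>) B)"
    by (rule indep_var_restrict[OF ind0 AB AI BI])
  define FA where "FA g = (\<Sum>l\<in>L. Re (g (Inr (Inl l)) * (u * g (Inl (m - l)))))" for g :: "nat + nat + unit \<Rightarrow> complex"
  define FB where "FB g = \<phi> (g (Inr (Inr ())))" for g :: "nat + nat + unit \<Rightarrow> complex"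
  have FAm: "FA \<in> borel_measurable (PiM A (\<lambda>_. borel))"
    unfolding FA_def
  proof (rule borel_measurable_sum)
    fix l assume l: "l \<in> L"
    have [simp]: "Inr (Inl l) \<in> A" "Inl (m - l) \<in> A" unfolding A_def using l by auto
    show "(\<lambda>g. Re (g (Inr (Inl l)) * (u * g (Inl (m - l))))) \<in> borel_measurable (PiM A (\<lambda>_. borel))"
      by measurable
  qed
  have FBm: "FB \<in> borel_measurable (PiM B (\<lambda>_. borel))"
  proof -
    have [simp]: "Inr (Inr ()) \<in> B" unfolding B_def by simp
    show ?thesis unfolding FB_def by measurable
  qed
  have "indep_var borel (FA \<circ> (\<lambda>\<omega>. restrict (\<lambda>i. V0 i \<omega>) A)) borel (FB \<circ> (\<lambda>\<omega>. restrict (\<lambda>i. V0 i \<omega>) B))"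
    by (rule indep_var_compose[OF iR FAm FBm])
  also have "FA \<circ> (\<lambda>\<omega>. restrict (\<lambda>i. V0 i \<omega>) A) = (\<lambda>\<omega>. \<Sum>l\<in>L. T l \<omega>)"
  proof
    fix \<omega>
    show "(FA \<circ> (\<lambda>\<omega>. restrict (\<lambda>i. V0 i \<omega>) A)) \<omega> = (\<Sum>l\<in>L. T l \<omega>)"
      unfolding FA_def comp_def
    proof (intro sum.cong refl)
      fix l assume l: "l \<in> L"
      have [simp]: "Inr (Inl l) \<in> A" "Inl (m - l) \<in> A" unfolding A_def using l by auto
      show "Re (restrict (\<lambda>i. V0 i \<omega>) A (Inr (Inl l)) * (u * restrict (\<lambda>i. V0 i \<omega>) A (Inl (m - l)))) = T l \<omega>"
        unfolding T_def V0_def hh_def xx_def by simp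
    qed
  qed
  also have "FB \<circ> (\<lambda>\<omega>. restrict (\<lambda>i. V0 i \<omega>) B) = Vw"
    unfolding FB_def B_def V0_def Vw_def by (auto simp: fun_eq_iff)
  finally have indSV: "indep_var borel (\<lambda>\<omega>. \<Sum>l\<in>L. T l \<omega>) borel Vw" .
  have Sm: "(\<lambda>\<omega>. \<Sum>l\<in>L. T l \<omega>) \<in> borel_measurable M"
    by (rule borel_measurable_sum) (rule Tm)
  have pdf_eq: "ofdm_pdf lam \<sigma>w a b = (\<lambda>y. \<Sum>j\<in>{a..b}. \<Sum>n\<in>{a..b}. (pfc lam {a..b} j * pfc lam {a..b} n / (lam j + lam n)) * Qf (lam j) \<sigma>w y)"
    by (rule ext) (rule ofdm_pdf_alt)
  have fm: "ofdm_pdf lam \<sigma>w a b \<in> borel_measurable borel"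
    unfolding pdf_eq by measurable
  have fi: "integrable lborel (ofdm_pdf lam \<sigma>w a b)"
  proof -
    have "integrable lborel (\<lambda>y. ofdm_pdf lam \<sigma>w a b y *\<^sub>R iexp (0 * y))"
      by (rule ofdm_pdf_fourier_int[OF aleb _ _ \<sigma>w]) (use injL lampos in \<open>auto simp: L_def\<close>)
    from integrable_Re[OF this] show ?thesis by (simp add: scaleR_conv_of_real)
  qed
  have "distributed M lborel (\<lambda>\<omega>. (\<Sum>l\<in>L. T l \<omega>) + Vw \<omega>) (\<lambda>y. ennreal (ofdm_pdf lam \<sigma>w a b y))"
    by (rule identify_distribution[OF Sm Vd[folded Vw_def] sw2 indSV fm fi charAll])
  then show ?thesis
    unfolding T_def Vw_def L_def a_def[symmetric] b_def[symmetric] lam_def[abs_def] hh_def xx_def .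
qed

lemma ofdm_y_eq_ii:
  assumes n: "n \<ge> 0" and nx: "nx \<ge> 1" and nh: "nh \<ge> 1" and mb: "m \<le> nx + nh - 2"
  shows "ofdm_y nx ns nh x h w n m \<omega> =
     (\<Sum>l\<in>{fst (ofdm_ab nx nh m)..snd (ofdm_ab nx nh m)}. h (n * int ns + int m) l \<omega> * x n (m - l) \<omega>) + w n m \<omega>"
proof -
  let ?a = "fst (ofdm_ab nx nh m)" and ?b = "snd (ofdm_ab nx nh m)"
  have ab: "?a = (m + 1) - nx" "?b = min m (nh - 1)" unfolding ofdm_ab_def by auto
  have sub: "{?a..?b} \<subseteq> {..<nh}" using ab nh by auto
  have "(\<Sum>l<nh. h (n * int ns + int m) l \<omega> * ofdm_s nx x n (int m - int l) \<omega>)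
      = (\<Sum>l\<in>{?a..?b}. h (n * int ns + int m) l \<omega> * ofdm_s nx x n (int m - int l) \<omega>)"
  proof (rule sum.mono_neutral_right[OF _ sub])
    show "finite {..<nh}" by simp
    show "\<forall>i\<in>{..<nh} - {?a..?b}. h (n * int ns + int m) i \<omega> * ofdm_s nx x n (int m - int i) \<omega> = 0"
      using ab by (auto simp: ofdm_s_def)
  qed
  also have "\<dots> = (\<Sum>l\<in>{?a..?b}. h (n * int ns + int m) l \<omega> * x n (m - l) \<omega>)"
  proof (intro sum.cong refl)
    fix l assume l: "l \<in> {?a..?b}"
    then have "l \<le> m" "m - l < nx" using ab nx by auto
    then have "ofdm_s nx x n (int m - int l) \<omega> = x n (m - l) \<omega>"
      unfolding ofdm_s_def by (simp add: nat_diff_distrib of_nat_diff)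
    then show "h (n * int ns + int m) l \<omega> * ofdm_s nx x n (int m - int l) \<omega> = h (n * int ns + int m) l \<omega> * x n (m - l) \<omega>"
      by simp
  qed
  finally show ?thesis unfolding ofdm_y_def using n by simp
qed

lemma ofdm_y_eq_i:
  assumes H: "n < 0 \<or> (n \<ge> 0 \<and> nx + nh - 1 \<le> m)" and nx: "nx \<ge> 1"
  shows "ofdm_y nx ns nh x h w n m \<omega> = w n m \<omega>"
proof (cases "n < 0")
  case True then show ?thesis unfolding ofdm_y_def by simp
next
  case False
  with H have m: "nx + nh - 1 \<le> m" by simp
  have "\<And>l. l < nh \<Longrightarrow> ofdm_s nx x n (int m - int l) \<omega> = 0"
    unfolding ofdm_s_def using m nx by auto
  then show ?thesis unfolding ofdm_y_def using False by simp
qed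

theorem theorem2:
  fixes M :: "'a measure"
    and nx nh nz ns :: nat
    and \<sigma>x \<sigma>w :: real and \<sigma>h :: "nat \<Rightarrow> real"
    and x :: "int \<Rightarrow> nat \<Rightarrow> 'a \<Rightarrow> complex"
    and h :: "int \<Rightarrow> nat \<Rightarrow> 'a \<Rightarrow> complex"
    and w :: "int \<Rightarrow> nat \<Rightarrow> 'a \<Rightarrow> complex"
    and n :: int and m :: nat
  assumes P: "prob_space M"
    and nx: "nx \<ge> 1" and nh: "nh \<ge> 1" and nz: "nz \<ge> nh" and ns: "ns = nx + nz"
    and \<sigma>x: "\<sigma>x > 0" and \<sigma>w: "\<sigma>w > 0" and \<sigma>h: "\<And>l. l < nh \<Longrightarrow> \<sigma>h l > 0"
    and data: "\<And>n k. n \<ge> 0 \<Longrightarrow> k < nx \<Longrightarrow> CN_rv M (\<sigma>x\<^sup>2) (x n k)"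
    and chan: "\<And>t l. l < nh \<Longrightarrow> CN_rv M ((\<sigma>h l)\<^sup>2) (h t l)"
    and noise: "\<And>n m. m < ns \<Longrightarrow> CN_rv M (\<sigma>w\<^sup>2) (w n m)"
    and indep: "\<And>n m. n \<ge> 0 \<Longrightarrow> m < ns \<Longrightarrow>
        prob_space.indep_vars M (\<lambda>_. borel)
          (\<lambda>i. case i of Inl k \<Rightarrow> x n k
                       | Inr (Inl l) \<Rightarrow> h (n * int ns + int m) l
                       | Inr (Inr _) \<Rightarrow> w n m)
          (Inl ` {..<nx} \<union> Inr ` Inl ` {..<nh} \<union> {Inr (Inr ())})"
    and m: "m < ns"
  shows
    "((n < 0 \<or> (n \<ge> 0 \<and> nx + nh - 1 \<le> m)) \<longrightarrow>
        distributed M lborel (\<lambda>\<omega>. Re (ofdm_y nx ns nh x h w n m \<omega>))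
          (\<lambda>y. ennreal (1 / sqrt (pi * \<sigma>w\<^sup>2) * exp (- y\<^sup>2 / \<sigma>w\<^sup>2))) \<and>
        distributed M lborel (\<lambda>\<omega>. Im (ofdm_y nx ns nh x h w n m \<omega>))
          (\<lambda>y. ennreal (1 / sqrt (pi * \<sigma>w\<^sup>2) * exp (- y\<^sup>2 / \<sigma>w\<^sup>2))))
     \<and>
     ((n \<ge> 0 \<and> m \<le> nx + nh - 2 \<and>
       inj_on (\<lambda>k. 2 / (\<sigma>h k * \<sigma>x)) {fst (ofdm_ab nx nh m)..snd (ofdm_ab nx nh m)}) \<longrightarrow>
        (let lam = (\<lambda>k. 2 / (\<sigma>h k * \<sigma>x)); a = fst (ofdm_ab nx nh m); b = snd (ofdm_ab nx nh m);
             f = ofdm_pdf lam \<sigma>w a b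
         in (\<forall>y. f y = f (- y)) \<and>
            distributed M lborel (\<lambda>\<omega>. Re (ofdm_y nx ns nh x h w n m \<omega>)) (\<lambda>y. ennreal (f y)) \<and>
            distributed M lborel (\<lambda>\<omega>. Im (ofdm_y nx ns nh x h w n m \<omega>)) (\<lambda>y. ennreal (f y))))"
proof -
  interpret prob_space M by (rule P)
  have nd: "\<And>y. normal_density 0 (sqrt (\<sigma>w\<^sup>2 / 2)) y = 1 / sqrt (pi * \<sigma>w\<^sup>2) * exp (- y\<^sup>2 / \<sigma>w\<^sup>2)"
    using \<sigma>w by (simp add: normal_density_def)
  have wRe: "distributed M lborel (\<lambda>\<omega>. Re (w n m \<omega>)) (\<lambda>t. ennreal (normal_density 0 (sqrt (\<sigma>w\<^sup>2 / 2)) t))"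
   and wIm: "distributed M lborel (\<lambda>\<omega>. Im (w n m \<omega>)) (\<lambda>t. ennreal (normal_density 0 (sqrt (\<sigma>w\<^sup>2 / 2)) t))"
    using noise[OF m] unfolding CN_rv_def by auto
  have partI: "((n < 0 \<or> (n \<ge> 0 \<and> nx + nh - 1 \<le> m)) \<longrightarrow>
        distributed M lborel (\<lambda>\<omega>. Re (ofdm_y nx ns nh x h w n m \<omega>))
          (\<lambda>y. ennreal (1 / sqrt (pi * \<sigma>w\<^sup>2) * exp (- y\<^sup>2 / \<sigma>w\<^sup>2))) \<and>
        distributed M lborel (\<lambda>\<omega>. Im (ofdm_y nx ns nh x h w n m \<omega>))
          (\<lambda>y. ennreal (1 / sqrt (pi * \<sigma>w\<^sup>2) * exp (- y\<^sup>2 / \<sigma>w\<^sup>2))))"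
  proof
    assume H: "n < 0 \<or> (n \<ge> 0 \<and> nx + nh - 1 \<le> m)"
    show "distributed M lborel (\<lambda>\<omega>. Re (ofdm_y nx ns nh x h w n m \<omega>))
          (\<lambda>y. ennreal (1 / sqrt (pi * \<sigma>w\<^sup>2) * exp (- y\<^sup>2 / \<sigma>w\<^sup>2))) \<and>
        distributed M lborel (\<lambda>\<omega>. Im (ofdm_y nx ns nh x h w n m \<omega>))
          (\<lambda>y. ennreal (1 / sqrt (pi * \<sigma>w\<^sup>2) * exp (- y\<^sup>2 / \<sigma>w\<^sup>2)))"
      using wRe wIm unfolding nd by (simp add: ofdm_y_eq_i[OF H nx])
  qed
  have partII: "((n \<ge> 0 \<and> m \<le> nx + nh - 2 \<and>
       inj_on (\<lambda>k. 2 / (\<sigma>h k * \<sigma>x)) {fst (ofdm_ab nx nh m)..snd (ofdm_ab nx nh m)}) \<longrightarrow>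
        (let lam = (\<lambda>k. 2 / (\<sigma>h k * \<sigma>x)); a = fst (ofdm_ab nx nh m); b = snd (ofdm_ab nx nh m);
             f = ofdm_pdf lam \<sigma>w a b
         in (\<forall>y. f y = f (- y)) \<and>
            distributed M lborel (\<lambda>\<omega>. Re (ofdm_y nx ns nh x h w n m \<omega>)) (\<lambda>y. ennreal (f y)) \<and>
            distributed M lborel (\<lambda>\<omega>. Im (ofdm_y nx ns nh x h w n m \<omega>)) (\<lambda>y. ennreal (f y))))"
  proof (intro impI, elim conjE)
    assume n0: "n \<ge> 0" and mb: "m \<le> nx + nh - 2"
      and inj: "inj_on (\<lambda>k. 2 / (\<sigma>h k * \<sigma>x)) {fst (ofdm_ab nx nh m)..snd (ofdm_ab nx nh m)}"
    let ?lam = "\<lambda>k. 2 / (\<sigma>h k * \<sigma>x)"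
    let ?a = "fst (ofdm_ab nx nh m)" and ?b = "snd (ofdm_ab nx nh m)"
    let ?f = "ofdm_pdf ?lam \<sigma>w ?a ?b"
    let ?hh = "h (n * int ns + int m)"
    have dat: "\<And>k. k < nx \<Longrightarrow> CN_rv M (\<sigma>x\<^sup>2) (x n k)" using data n0 by blast
    have ch: "\<And>l. l < nh \<Longrightarrow> CN_rv M ((\<sigma>h l)\<^sup>2) (h (n * int ns + int m) l)" using chan by blast
    have ind: "prob_space.indep_vars M (\<lambda>_. borel)
          (\<lambda>i. case i of Inl k \<Rightarrow> x n k
                       | Inr (Inl l) \<Rightarrow> h (n * int ns + int m) l
                       | Inr (Inr _) \<Rightarrow> w n m)
          (Inl ` {..<nx} \<union> Inr ` Inl ` {..<nh} \<union> {Inr (Inr ())})"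
      by (rule indep[OF n0 m])
    have sym: "\<forall>y. ?f y = ?f (- y)"
      unfolding ofdm_pdf_def by (auto intro!: sum.cong arg_cong2[where f="(*)"] simp: add.commute)
    have dRe: "distributed M lborel
           (\<lambda>\<omega>. (\<Sum>l\<in>{?a..?b}. Re (?hh l \<omega> * (1 * x n (m - l) \<omega>))) + Re (w n m \<omega>)) (\<lambda>y. ennreal (?f y))"
      by (rule part_ii_generic[where \<phi>=Re and u=1 and w=w and n=n and m=m and x=x and h=h and ns=ns, OF P nx nh \<sigma>x \<sigma>w \<sigma>h dat ch ind mb inj _ _ wRe]) auto
    have dIm: "distributed M lborel
           (\<lambda>\<omega>. (\<Sum>l\<in>{?a..?b}. Re (?hh l \<omega> * (- \<i> * x n (m - l) \<omega>))) + Im (w n m \<omega>)) (\<lambda>y. ennreal (?f y))"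
      by (rule part_ii_generic[where \<phi>=Im and u="- \<i>" and w=w and n=n and m=m and x=x and h=h and ns=ns, OF P nx nh \<sigma>x \<sigma>w \<sigma>h dat ch ind mb inj _ _ wIm]) auto
    have eRe: "(\<lambda>\<omega>. Re (ofdm_y nx ns nh x h w n m \<omega>)) = (\<lambda>\<omega>. (\<Sum>l\<in>{?a..?b}. Re (?hh l \<omega> * (1 * x n (m - l) \<omega>))) + Re (w n m \<omega>))"
      by (auto simp: fun_eq_iff ofdm_y_eq_ii[OF n0 nx nh mb] Re_sum)
    have eIm: "(\<lambda>\<omega>. Im (ofdm_y nx ns nh x h w n m \<omega>)) = (\<lambda>\<omega>. (\<Sum>l\<in>{?a..?b}. Re (?hh l \<omega> * (- \<i> * x n (m - l) \<omega>))) + Im (w n m \<omega>))"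
      by (auto simp: fun_eq_iff ofdm_y_eq_ii[OF n0 nx nh mb] Im_sum add.commute)
    show "let lam = ?lam; a = ?a; b = ?b; f = ofdm_pdf lam \<sigma>w a b
         in (\<forall>y. f y = f (- y)) \<and>
            distributed M lborel (\<lambda>\<omega>. Re (ofdm_y nx ns nh x h w n m \<omega>)) (\<lambda>y. ennreal (f y)) \<and>
            distributed M lborel (\<lambda>\<omega>. Im (ofdm_y nx ns nh x h w n m \<omega>)) (\<lambda>y. ennreal (f y))"
      unfolding Let_def eRe eIm using sym dRe dIm by blast
  qed
  show ?thesis using partI partII by blast
qed

end
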